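(* Let $0\le\epsilon<1$ and let $\rho^{AB}$ be a quantum state on a finite-dimensional bipartite system $AB$ with marginals $\rho^A,\rho^B$. Then $$I^\epsilon_H(A:B)_\rho\ \le\ 2\log_2\min\{|A|,|B|\}+3\log_2\frac{1}{1-\epsilon}+6\log_2 3-4,$$ where $|A|,|B|$ are the dimensions of the systems.
   Context: For quantum states $\alpha,\beta$ on the same finite-dimensional Hilbert space and $0\le\epsilon<1$, $D^\epsilon_H(\alpha\|\beta):=\max_\Pi -\log_2\operatorname{Tr}[\Pi\beta]$, the maximum over POVM elements $0\le\Pi\le\mathbb{1}$ with $\operatorname{Tr}[\Pi\alpha]\ge 1-\epsilon$. The hypothesis testing mutual information is $I^\epsilon_H(A:B)_\rho:=D^\epsilon_H(\rho^{AB}\|\rho^A\otimes\rho^B)$. *)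

theory Defs
  imports Complex_Main "HOL-Library.Extended_Real" "Jordan_Normal_Form.Matrix" "Jordan_Normal_Form.Conjugate"
begin

(* Quantum objects on C^n are n x n complex matrices (Jordan_Normal_Form).
   A bipartite system AB with dim A = dA, dim B = dB is C^(dA*dB) with
   basis index  a*dB + b  for |a>|b>  (a < dA, b < dB). *)

definition mat_trace :: "complex mat \<Rightarrow> complex" where
  "mat_trace M = (\<Sum>i<dim_row M. M $$ (i, i))"

definition hermitian_mat :: "nat \<Rightarrow> complex mat \<Rightarrow> bool" where
  "hermitian_mat n M \<longleftrightarrow> M \<in> carrier_mat n n \<and>
     (\<forall>i<n. \<forall>j<n. M $$ (i, j) = cnj (M $$ (j, i)))"

definition psd_mat :: "nat \<Rightarrow> complex mat \<Rightarrow> bool" where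
  "psd_mat n M \<longleftrightarrow> hermitian_mat n M \<and>
     (\<forall>v \<in> carrier_vec n. 0 \<le> Re (conjugate v \<bullet> (M *\<^sub>v v)))"

definition density_mat :: "nat \<Rightarrow> complex mat \<Rightarrow> bool" where
  "density_mat n M \<longleftrightarrow> psd_mat n M \<and> mat_trace M = 1"

definition povm_elem :: "nat \<Rightarrow> complex mat \<Rightarrow> bool" where
  "povm_elem n P \<longleftrightarrow> psd_mat n P \<and> psd_mat n (1\<^sub>m n - P)"

definition kron :: "nat \<Rightarrow> nat \<Rightarrow> complex mat \<Rightarrow> complex mat \<Rightarrow> complex mat" where
  "kron dA dB X Y = mat (dA * dB) (dA * dB)
     (\<lambda>(i, j). X $$ (i div dB, j div dB) * Y $$ (i mod dB, j mod dB))"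

definition marg_A :: "nat \<Rightarrow> nat \<Rightarrow> complex mat \<Rightarrow> complex mat" where
  "marg_A dA dB R = mat dA dA (\<lambda>(a, a'). \<Sum>b<dB. R $$ (a * dB + b, a' * dB + b))"

definition marg_B :: "nat \<Rightarrow> nat \<Rightarrow> complex mat \<Rightarrow> complex mat" where
  "marg_B dA dB R = mat dB dB (\<lambda>(b, b'). \<Sum>a<dA. R $$ (a * dB + b, a * dB + b'))"

definition hyp_test_div :: "nat \<Rightarrow> real \<Rightarrow> complex mat \<Rightarrow> complex mat \<Rightarrow> ereal" where
  "hyp_test_div n eps \<alpha> \<beta> =
     (SUP P \<in> {P. povm_elem n P \<and> Re (mat_trace (P * \<alpha>)) \<ge> 1 - eps}.
        (if Re (mat_trace (P * \<beta>)) = 0 then \<infinity> else ereal (- log 2 (Re (mat_trace (P * \<beta>))))))"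

definition hyp_test_MI :: "nat \<Rightarrow> nat \<Rightarrow> real \<Rightarrow> complex mat \<Rightarrow> ereal" where
  "hyp_test_MI dA dB eps R =
     hyp_test_div (dA * dB) eps R (kron dA dB (marg_A dA dB R) (marg_B dA dB R))"

end

theory Submission
  imports Defs "Jordan_Normal_Form.Determinant"
begin


lemma mult_entry:
  assumes "A \<in> carrier_mat n k" "B \<in> carrier_mat k m" "i < n" "j < m"
  shows "(A * B) $$ (i, j) = (\<Sum>l<k. A $$ (i, l) * B $$ (l, j))"
  using assms by (auto simp: scalar_prod_def atLeast0LessThan intro!: sum.cong)

lemma row_col[simp]:
  assumes "A \<in> carrier_mat n k" "B \<in> carrier_mat k m" "i < n" "j < m"
  shows "row A i \<bullet> col B j = (\<Sum>l<k. A $$ (i, l) * B $$ (l, j))"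
  using assms by (auto simp: scalar_prod_def atLeast0LessThan intro!: sum.cong)

definition adj :: "complex mat \<Rightarrow> complex mat" where
  "adj A = mat (dim_col A) (dim_row A) (\<lambda>(i, j). cnj (A $$ (j, i)))"

lemma adj_dims[simp]: "dim_row (adj A) = dim_col A" "dim_col (adj A) = dim_row A"
  unfolding adj_def by simp_all

lemma adj_index[simp]: "i < dim_col A \<Longrightarrow> j < dim_row A \<Longrightarrow> adj A $$ (i, j) = cnj (A $$ (j, i))"
  unfolding adj_def by simp_all

lemma adj_carrier[simp]: "A \<in> carrier_mat n m \<Longrightarrow> adj A \<in> carrier_mat m n"
  unfolding carrier_mat_def by simp

lemma adj_adj[simp]: "adj (adj A) = A"
  by (rule eq_matI) auto

lemma adj_mult:
  assumes "A \<in> carrier_mat n k" "B \<in> carrier_mat k m"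
  shows "adj (A * B) = adj B * adj A"
proof (rule eq_matI)
  fix i j assume "i < dim_row (adj B * adj A)" "j < dim_col (adj B * adj A)"
  then have ij: "i < m" "j < n" using assms by auto
  have "adj (A * B) $$ (i, j) = cnj ((A * B) $$ (j, i))" using ij assms by auto
  also have "\<dots> = (\<Sum>l<k. cnj (B $$ (l, i)) * cnj (A $$ (j, l)))"
    using ij assms by (simp add: mult_entry[OF assms(1,2)] mult.commute)
  also have "\<dots> = (adj B * adj A) $$ (i, j)"
    using ij assms by (subst mult_entry[of _ m k _ n]) auto
  finally show "adj (A * B) $$ (i, j) = (adj B * adj A) $$ (i, j)" .
qed (use assms in auto)

lemma adj_add: "A \<in> carrier_mat n m \<Longrightarrow> B \<in> carrier_mat n m \<Longrightarrow> adj (A + B) = adj A + adj B"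
  by (rule eq_matI) auto

lemma adj_minus: "A \<in> carrier_mat n m \<Longrightarrow> B \<in> carrier_mat n m \<Longrightarrow> adj (A - B) = adj A - adj B"
  by (rule eq_matI) auto

lemma adj_smult: "adj (c \<cdot>\<^sub>m A) = cnj c \<cdot>\<^sub>m adj A"
  by (rule eq_matI) auto

lemma adj_one[simp]: "adj (1\<^sub>m n) = 1\<^sub>m n"
  by (rule eq_matI) auto

lemma adj_zero[simp]: "adj (0\<^sub>m n m) = 0\<^sub>m m n"
  by (rule eq_matI) auto

lemma hermitian_iff: "hermitian_mat n M \<longleftrightarrow> M \<in> carrier_mat n n \<and> adj M = M"
proof
  assume h: "hermitian_mat n M"
  then have c: "M \<in> carrier_mat n n" by (simp add: hermitian_mat_def)
  moreover have "adj M = M"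
  proof (rule eq_matI)
    fix i j assume "i < dim_row M" "j < dim_col M"
    then have ij: "i < n" "j < n" using c by auto
    have e: "M $$ (j, i) = cnj (M $$ (i, j))" using h ij unfolding hermitian_mat_def by blast
    have "adj M $$ (i, j) = cnj (M $$ (j, i))" using ij c by simp
    then show "adj M $$ (i, j) = M $$ (i, j)" using e by simp
  qed (use c in simp_all)
  ultimately show "M \<in> carrier_mat n n \<and> adj M = M" by simp
next
  assume a: "M \<in> carrier_mat n n \<and> adj M = M"
  then have c: "M \<in> carrier_mat n n" and h: "adj M = M" by auto
  show "hermitian_mat n M" unfolding hermitian_mat_def
  proof (intro conjI allI impI)
    fix i j assume "i < n" "j < n"
    then have "adj M $$ (i, j) = cnj (M $$ (j, i))" using c by simp
    then show "M $$ (i, j) = cnj (M $$ (j, i))" using h by simp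
  qed (use c in simp)
qed

lemma trace_comm:
  assumes "A \<in> carrier_mat n m" "B \<in> carrier_mat m n"
  shows "mat_trace (A * B) = mat_trace (B * A)"
proof -
  have "mat_trace (A * B) = (\<Sum>i<n. \<Sum>l<m. A $$ (i, l) * B $$ (l, i))"
    unfolding mat_trace_def using assms by (auto simp: mult_entry intro!: sum.cong)
  also have "\<dots> = (\<Sum>l<m. \<Sum>i<n. B $$ (l, i) * A $$ (i, l))"
    by (subst sum.swap) (simp add: mult.commute)
  also have "\<dots> = mat_trace (B * A)"
    unfolding mat_trace_def using assms by (auto simp: mult_entry intro!: sum.cong)
  finally show ?thesis .
qed

lemma trace_add: "A \<in> carrier_mat n n \<Longrightarrow> B \<in> carrier_mat n n \<Longrightarrow> mat_trace (A + B) = mat_trace A + mat_trace B"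
  by (auto simp: mat_trace_def sum.distrib)

lemma trace_minus: "A \<in> carrier_mat n n \<Longrightarrow> B \<in> carrier_mat n n \<Longrightarrow> mat_trace (A - B) = mat_trace A - mat_trace B"
  by (auto simp: mat_trace_def sum_subtractf)

lemma trace_smult: "A \<in> carrier_mat n n \<Longrightarrow> mat_trace (c \<cdot>\<^sub>m A) = c * mat_trace A"
  by (simp add: mat_trace_def sum_distrib_left)

lemma trace_one: "mat_trace (1\<^sub>m n) = of_nat n"
  by (auto simp: mat_trace_def)

lemma trace_adj: "A \<in> carrier_mat n n \<Longrightarrow> mat_trace (adj A) = cnj (mat_trace A)"
  by (auto simp: mat_trace_def)

section \<open>Sesquilinear forms and psd\<close>

definition sq :: "complex mat \<Rightarrow> (nat \<Rightarrow> complex) \<Rightarrow> (nat \<Rightarrow> complex) \<Rightarrow> complex" where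
  "sq M x y = (\<Sum>i<dim_row M. \<Sum>j<dim_col M. cnj (x i) * M $$ (i, j) * y j)"

definition psd :: "nat \<Rightarrow> complex mat \<Rightarrow> bool" where
  "psd n M \<longleftrightarrow> M \<in> carrier_mat n n \<and> adj M = M \<and> (\<forall>x. 0 \<le> Re (sq M x x))"

lemma sq_vec:
  assumes "M \<in> carrier_mat n n"
  shows "conjugate (vec n x) \<bullet> (M *\<^sub>v vec n x) = sq M x x"
proof -
  have "conjugate (vec n x) \<bullet> (M *\<^sub>v vec n x) = (\<Sum>i<n. cnj (x i) * (row M i \<bullet> vec n x))"
    using assms by (simp add: scalar_prod_def atLeast0LessThan)
  also have "\<dots> = (\<Sum>i<n. cnj (x i) * (\<Sum>j<n. M $$ (i, j) * x j))"
    using assms by (intro sum.cong refl) (simp add: scalar_prod_def atLeast0LessThan)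
  also have "\<dots> = sq M x x"
    using assms by (simp add: sq_def sum_distrib_left mult.assoc)
  finally show ?thesis .
qed

lemma psd_iff: "psd_mat n M \<longleftrightarrow> psd n M"
proof
  assume a: "psd_mat n M"
  then have c: "M \<in> carrier_mat n n" and h: "adj M = M"
    by (auto simp: psd_mat_def hermitian_iff)
  have "0 \<le> Re (sq M x x)" for x
    using a c sq_vec[OF c, of x] unfolding psd_mat_def by (metis vec_carrier)
  then show "psd n M" using c h by (simp add: psd_def)
next
  assume a: "psd n M"
  then have c: "M \<in> carrier_mat n n" by (simp add: psd_def)
  show "psd_mat n M" unfolding psd_mat_def
  proof (intro conjI ballI)
    show "hermitian_mat n M" using a by (simp add: hermitian_iff psd_def)
    fix v :: "complex vec" assume "v \<in> carrier_vec n"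
    then have "v = vec n (\<lambda>i. v $ i)" by auto
    then show "0 \<le> Re (conjugate v \<bullet> (M *\<^sub>v v))"
      using a c sq_vec[OF c, of "\<lambda>i. v $ i"] unfolding psd_def by metis
  qed
qed


lemma sq_n: "M \<in> carrier_mat n n \<Longrightarrow> sq M x y = (\<Sum>i<n. \<Sum>j<n. cnj (x i) * M $$ (i, j) * y j)"
  by (simp add: sq_def)

lemma sq_add: assumes "A \<in> carrier_mat n n" "B \<in> carrier_mat n n"
  shows "sq (A + B) x y = sq A x y + sq B x y"
proof -
  have c: "A + B \<in> carrier_mat n n" using assms by simp
  have "sq (A + B) x y = (\<Sum>i<n. \<Sum>j<n. cnj (x i) * A $$ (i, j) * y j + cnj (x i) * B $$ (i, j) * y j)"
    unfolding sq_n[OF c] using assms by (intro sum.cong refl) (simp add: distrib_left distrib_right)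
  then show ?thesis unfolding sq_n[OF assms(1)] sq_n[OF assms(2)] by (simp add: sum.distrib)
qed

lemma sq_minus: assumes "A \<in> carrier_mat n n" "B \<in> carrier_mat n n"
  shows "sq (A - B) x y = sq A x y - sq B x y"
proof -
  have c: "A - B \<in> carrier_mat n n" using assms by (simp add: minus_carrier_mat)
  have "sq (A - B) x y = (\<Sum>i<n. \<Sum>j<n. cnj (x i) * A $$ (i, j) * y j - cnj (x i) * B $$ (i, j) * y j)"
    unfolding sq_n[OF c] using assms by (intro sum.cong refl) (simp add: right_diff_distrib left_diff_distrib)
  then show ?thesis unfolding sq_n[OF assms(1)] sq_n[OF assms(2)] by (simp add: sum_subtractf)
qed

lemma sq_smult: assumes "A \<in> carrier_mat n n" shows "sq (c \<cdot>\<^sub>m A) x y = c * sq A x y"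
proof -
  have cc: "c \<cdot>\<^sub>m A \<in> carrier_mat n n" using assms by simp
  have "sq (c \<cdot>\<^sub>m A) x y = (\<Sum>i<n. \<Sum>j<n. c * (cnj (x i) * A $$ (i, j) * y j))"
    unfolding sq_n[OF cc] using assms by (intro sum.cong refl) (simp add: mult.left_commute)
  then show ?thesis unfolding sq_n[OF assms(1)] by (simp add: sum_distrib_left)
qed

lemma sq_lin_right: assumes "M \<in> carrier_mat n n"
  shows "sq M z (\<lambda>i. x i + c * y i) = sq M z x + c * sq M z y"
proof -
  have "sq M z (\<lambda>i. x i + c * y i) = (\<Sum>i<n. \<Sum>j<n. cnj (z i) * M $$ (i, j) * x j + c * (cnj (z i) * M $$ (i, j) * y j))"
    unfolding sq_n[OF assms] by (intro sum.cong refl) (simp add: distrib_left mult.left_commute)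
  then show ?thesis unfolding sq_n[OF assms] by (simp add: sum.distrib sum_distrib_left)
qed

lemma sq_lin_left: assumes "M \<in> carrier_mat n n"
  shows "sq M (\<lambda>i. x i + c * y i) z = sq M x z + cnj c * sq M y z"
proof -
  have "sq M (\<lambda>i. x i + c * y i) z = (\<Sum>i<n. \<Sum>j<n. cnj (x i) * M $$ (i, j) * z j + cnj c * (cnj (y i) * M $$ (i, j) * z j))"
    unfolding sq_n[OF assms] by (intro sum.cong refl) (simp add: distrib_left distrib_right mult.left_commute)
  then show ?thesis unfolding sq_n[OF assms] by (simp add: sum.distrib sum_distrib_left)
qed

lemma sq_herm: "M \<in> carrier_mat n n \<Longrightarrow> adj M = M \<Longrightarrow> sq M y x = cnj (sq M x y)"
proof -
  assume c: "M \<in> carrier_mat n n" and h: "adj M = M"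
  have e: "M $$ (j, i) = cnj (M $$ (i, j))" if "i < n" "j < n" for i j
  proof -
    have "adj M $$ (i, j) = cnj (M $$ (j, i))" using that c by simp
    then show ?thesis using h by simp
  qed
  have "sq M y x = (\<Sum>j<n. \<Sum>i<n. cnj (y j) * M $$ (j, i) * x i)" using c by (simp add: sq_n)
  also have "\<dots> = (\<Sum>i<n. \<Sum>j<n. cnj (y j) * M $$ (j, i) * x i)" by (rule sum.swap)
  also have "\<dots> = (\<Sum>i<n. \<Sum>j<n. cnj (cnj (x i) * M $$ (i, j) * y j))"
  proof (intro sum.cong refl)
    fix i j assume "i \<in> {..<n}" "j \<in> {..<n}"
    then have "M $$ (j, i) = cnj (M $$ (i, j))" using e[of i j] by simp
    then show "cnj (y j) * M $$ (j, i) * x i = cnj (cnj (x i) * M $$ (i, j) * y j)"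
      by (simp add: mult.commute mult.left_commute)
  qed
  also have "\<dots> = cnj (sq M x y)" using c by (simp add: sq_n)
  finally show ?thesis .
qed

lemma delta_mult[simp]: "(if P then 1 else 0) * (z::complex) = (if P then z else 0)"
   "z * (if P then 1 else 0) = (if P then z else 0)" "cnj (if P then 1 else 0) = (if P then 1 else 0)"
  by (cases P; simp)+

lemma sq_delta: "M \<in> carrier_mat n n \<Longrightarrow> i < n \<Longrightarrow> j < n \<Longrightarrow>
   sq M (\<lambda>k. if k = i then 1 else 0) (\<lambda>k. if k = j then 1 else 0) = M $$ (i, j)"
  unfolding sq_n by simp

lemma sq_delta_right: "M \<in> carrier_mat n n \<Longrightarrow> j < n \<Longrightarrow>
   sq M x (\<lambda>k. if k = j then 1 else 0) = (\<Sum>i<n. cnj (x i) * M $$ (i, j))"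
  unfolding sq_n by simp

lemma cs_scalar:
  fixes a c :: real and b :: complex
  assumes "0 \<le> a" "0 \<le> c" and "\<And>l::complex. 0 \<le> a + 2 * Re (l * b) + (cmod l)\<^sup>2 * c"
  shows "(cmod b)\<^sup>2 \<le> a * c"
proof (cases "b = 0")
  case True
  show ?thesis using True assms by simp
next
  case False
  then have nb: "0 < (cmod b)\<^sup>2" by simp
  have re: "Re (cnj b * b) = (cmod b)\<^sup>2" using cmod_power2[of b] by (simp add: power2_eq_square)
  show ?thesis
  proof (cases "c = 0")
    case True
    define t where "t = (a + 1) / (2 * (cmod b)\<^sup>2)"
    have "0 \<le> a + 2 * Re (complex_of_real (- t) * cnj b * b)"
      using assms(3)[of "complex_of_real (-t) * cnj b"] True by (simp add: mult.assoc)
    also have "Re (complex_of_real (- t) * cnj b * b) = - t * (cmod b)\<^sup>2"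
      by (simp add: mult.assoc re[symmetric])
    finally have "0 \<le> a - 2 * t * (cmod b)\<^sup>2" by simp
    also have "2 * t * (cmod b)\<^sup>2 = a + 1" using nb by (simp add: t_def field_simps)
    finally show ?thesis by simp
  next
    case False
    have c0: "0 \<le> c" using assms by simp
    then have cp: "0 < c" using False by simp
    define l where "l = - cnj b / complex_of_real c"
    have "0 \<le> a + 2 * Re (l * b) + (cmod l)\<^sup>2 * c" by (rule assms(3))
    also have "Re (l * b) = - (cmod b)\<^sup>2 / c"
      unfolding l_def using cp re by (simp add: Re_divide_of_real)
    also have "(cmod l)\<^sup>2 = (cmod b)\<^sup>2 / c\<^sup>2"
      unfolding l_def using cp by (simp add: norm_divide power_divide)
    finally have "0 \<le> a - (cmod b)\<^sup>2 / c" using cp by (simp add: power2_eq_square field_simps)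
    then show ?thesis using cp by (simp add: field_simps)
  qed
qed


lemma psd_carrier: "psd n M \<Longrightarrow> M \<in> carrier_mat n n" by (simp add: psd_def)
lemma psd_adj: "psd n M \<Longrightarrow> adj M = M" by (simp add: psd_def)
lemma psd_sq: "psd n M \<Longrightarrow> 0 \<le> Re (sq M x x)" by (simp add: psd_def)

lemma psd_cs:
  assumes p: "psd n M"
  shows "(cmod (sq M x y))\<^sup>2 \<le> Re (sq M x x) * Re (sq M y y)"
proof (rule cs_scalar)
  have c: "M \<in> carrier_mat n n" using p by (rule psd_carrier)
  show "0 \<le> Re (sq M x x)" "0 \<le> Re (sq M y y)" using p by (auto intro: psd_sq)
  fix l :: complex
  have yx: "sq M y x = cnj (sq M x y)" using sq_herm[OF c psd_adj[OF p]] .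
  have "sq M (\<lambda>i. x i + l * y i) (\<lambda>i. x i + l * y i) =
      sq M x x + l * sq M x y + cnj l * (cnj (sq M x y) + l * sq M y y)"
    by (simp add: sq_lin_left[OF c] sq_lin_right[OF c] yx)
  also have "\<dots> = sq M x x + (l * sq M x y + cnj (l * sq M x y)) + (cnj l * l) * sq M y y"
    by (simp add: algebra_simps)
  also have "cnj l * l = complex_of_real ((cmod l)\<^sup>2)"
    using complex_norm_square[of l] by (simp add: mult.commute)
  finally have "Re (sq M (\<lambda>i. x i + l * y i) (\<lambda>i. x i + l * y i)) =
      Re (sq M x x) + 2 * Re (l * sq M x y) + (cmod l)\<^sup>2 * Re (sq M y y)"
    by simp
  moreover have "0 \<le> Re (sq M (\<lambda>i. x i + l * y i) (\<lambda>i. x i + l * y i))" using p by (rule psd_sq)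
  ultimately show "0 \<le> Re (sq M x x) + 2 * Re (l * sq M x y) + (cmod l)\<^sup>2 * Re (sq M y y)" by simp
qed

lemma psd_diag:
  assumes p: "psd n M" and i: "i < n"
  shows "0 \<le> Re (M $$ (i, i))" "Im (M $$ (i, i)) = 0"
proof -
  have c: "M \<in> carrier_mat n n" using p by (rule psd_carrier)
  show "0 \<le> Re (M $$ (i, i))" using psd_sq[OF p, of "\<lambda>k. if k = i then 1 else 0"] sq_delta[OF c i i] by simp
  have "adj M $$ (i, i) = cnj (M $$ (i, i))" using c i by simp
  then have "M $$ (i, i) = cnj (M $$ (i, i))" using psd_adj[OF p] by simp
  then show "Im (M $$ (i, i)) = 0" by (metis cnj.simps(2) complex.expand neg_equal_zero)
qed

lemma psd_trace: "psd n M \<Longrightarrow> 0 \<le> Re (mat_trace M)"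
proof -
  assume p: "psd n M"
  have "Re (mat_trace M) = (\<Sum>i<n. Re (M $$ (i, i)))"
    using psd_carrier[OF p] by (simp add: mat_trace_def)
  also have "\<dots> \<ge> 0" using psd_diag[OF p] by (intro sum_nonneg) auto
  finally show ?thesis .
qed

lemma psd_offdiag_zero:
  assumes p: "psd n M" and i: "i < n" and j: "j < n" and z: "M $$ (j, j) = 0"
  shows "M $$ (i, j) = 0"
proof -
  have c: "M \<in> carrier_mat n n" using p by (rule psd_carrier)
  have "(cmod (M $$ (i, j)))\<^sup>2 \<le> Re (M $$ (i, i)) * Re (M $$ (j, j))"
    using psd_cs[OF p, of "\<lambda>k. if k = i then 1 else 0" "\<lambda>k. if k = j then 1 else 0"]
    by (simp only: sq_delta[OF c i i] sq_delta[OF c i j] sq_delta[OF c j j])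
  then show ?thesis using z by simp
qed


lemma psd_herm_entry:
  assumes p: "psd n M" and i: "i < n" and j: "j < n"
  shows "M $$ (i, j) = cnj (M $$ (j, i))"
proof -
  have "adj M $$ (i, j) = cnj (M $$ (j, i))" using psd_carrier[OF p] i j by simp
  then show ?thesis using psd_adj[OF p] by simp
qed

lemma decomp_aux:
  "\<forall>M. psd n M \<longrightarrow> m \<le> n \<longrightarrow> (\<forall>i<n. \<forall>j<n. (m \<le> i \<or> m \<le> j) \<longrightarrow> M $$ (i, j) = 0) \<longrightarrow>
     (\<exists>f. \<forall>i<n. \<forall>j<n. M $$ (i, j) = (\<Sum>k<m. f k i * cnj (f k j)))"
proof (induction m)
  case 0
  then show ?case by auto
next
  case (Suc m)
  show ?case
  proof (intro allI impI)
    fix M assume p: "psd n M" and mn: "Suc m \<le> n"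
      and supp: "\<forall>i<n. \<forall>j<n. (Suc m \<le> i \<or> Suc m \<le> j) \<longrightarrow> M $$ (i, j) = 0"
    have c: "M \<in> carrier_mat n n" using p by (rule psd_carrier)
    have m: "m < n" using mn by simp
    define p0 where "p0 = M $$ (m, m)"
    show "\<exists>f. \<forall>i<n. \<forall>j<n. M $$ (i, j) = (\<Sum>k<Suc m. f k i * cnj (f k j))"
    proof (cases "p0 = 0")
      case True
      have col: "M $$ (i, m) = 0" if "i < n" for i
        using psd_offdiag_zero[OF p that m] True p0_def by simp
      have row: "M $$ (m, j) = 0" if "j < n" for j
        using psd_herm_entry[OF p m that] col[OF that] by simp
      have supp': "\<forall>i<n. \<forall>j<n. (m \<le> i \<or> m \<le> j) \<longrightarrow> M $$ (i, j) = 0"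
      proof (intro allI impI)
        fix i j assume ij: "i < n" "j < n" "m \<le> i \<or> m \<le> j"
        show "M $$ (i, j) = 0"
        proof (cases "i = m \<or> j = m")
          case True then show ?thesis using row col ij by auto
        next
          case False then show ?thesis using supp ij by auto
        qed
      qed
      have "\<exists>f. \<forall>i<n. \<forall>j<n. M $$ (i, j) = (\<Sum>k<m. f k i * cnj (f k j))"
        using spec[OF Suc.IH, of M] p Suc_leD[OF mn] supp' by blast
      then obtain f where f: "\<forall>i<n. \<forall>j<n. M $$ (i, j) = (\<Sum>k<m. f k i * cnj (f k j))" by blast
      show ?thesis
        by (rule exI[of _ "f(m := (\<lambda>_. 0))"]) (use f in simp)
    next
      case False
      have rp: "0 \<le> Re p0" "Im p0 = 0" using psd_diag[OF p m] p0_def by auto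
      then have rpos: "0 < Re p0" using False by (metis complex.expand order_le_less zero_complex.sel)
      define r where "r = sqrt (Re p0)"
      have r0: "0 < r" using rpos by (simp add: r_def)
      have p0r: "p0 = complex_of_real (r * r)" using rp rpos
        by (simp add: r_def complex_eq_iff)
      define v where "v i = M $$ (i, m) / complex_of_real r" for i
      define V where "V = mat n n (\<lambda>(i, j). v i * cnj (v j))"
      define N where "N = M - V"
      have cV: "V \<in> carrier_mat n n" by (simp add: V_def)
      have cN: "N \<in> carrier_mat n n" using c cV by (simp add: N_def minus_carrier_mat)
      have Nij: "N $$ (i, j) = M $$ (i, j) - v i * cnj (v j)" if "i < n" "j < n" for i j
        using that c by (simp add: N_def V_def)
      have adjN: "adj N = N"
      proof (rule eq_matI)
        fix i j assume "i < dim_row N" "j < dim_col N"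
        then have ij: "i < n" "j < n" using cN by auto
        have "adj N $$ (i, j) = cnj (N $$ (j, i))" using ij cN by simp
        also have "\<dots> = cnj (M $$ (j, i)) - v i * cnj (v j)" using Nij[OF ij(2,1)] by simp
        also have "cnj (M $$ (j, i)) = M $$ (i, j)" using psd_herm_entry[OF p ij] by simp
        finally show "adj N $$ (i, j) = N $$ (i, j)" using Nij[OF ij] by simp
      qed (use cN in simp_all)
      have sqN: "0 \<le> Re (sq N x x)" for x
      proof -
        define w where "w = (\<Sum>i<n. cnj (x i) * v i)"
        have "sq V x x = (\<Sum>i<n. \<Sum>j<n. (cnj (x i) * v i) * (cnj (v j) * x j))"
          unfolding sq_n[OF cV] by (intro sum.cong refl) (simp add: V_def mult.assoc)
        also have "\<dots> = w * cnj w" unfolding w_def sum_product[symmetric]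
          by (simp add: sum_conjugate[where 'a=complex, simplified] mult.commute)
        finally have sV: "sq V x x = w * cnj w" .
        have w: "w = sq M x (\<lambda>k. if k = m then 1 else 0) / complex_of_real r"
          unfolding w_def sq_delta_right[OF c m] v_def by (simp add: sum_divide_distrib)
        have cs: "(cmod (sq M x (\<lambda>k. if k = m then 1 else 0)))\<^sup>2 \<le> Re (sq M x x) * (r * r)"
          using psd_cs[OF p, of x "\<lambda>k. if k = m then 1 else 0"] sq_delta[OF c m m] p0r p0_def by simp
        have "Re (w * cnj w) = (cmod w)\<^sup>2" using cmod_power2[of w] by (simp add: power2_eq_square)
        also have "\<dots> = (cmod (sq M x (\<lambda>k. if k = m then 1 else 0)))\<^sup>2 / (r * r)"
          using r0 by (simp add: w norm_divide power_divide power2_eq_square)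
        also have "\<dots> \<le> Re (sq M x x)" using cs r0 by (simp add: divide_le_eq)
        finally have "Re (sq V x x) \<le> Re (sq M x x)" using sV by simp
        then show ?thesis unfolding N_def sq_minus[OF c cV] by simp
      qed
      have pN: "psd n N" unfolding psd_def using cN adjN sqN by blast
      have suppN: "\<forall>i<n. \<forall>j<n. (m \<le> i \<or> m \<le> j) \<longrightarrow> N $$ (i, j) = 0"
      proof (intro allI impI)
        fix i j assume ij: "i < n" "j < n" "m \<le> i \<or> m \<le> j"
        have vz: "v k = 0" if "k < n" "Suc m \<le> k" for k
          using supp that m by (simp add: v_def)
        have vm: "v m = complex_of_real r" using p0r r0 by (simp add: v_def p0_def[symmetric])
        consider "i = m" | "j = m" | "Suc m \<le> i" | "Suc m \<le> j" using ij by linarith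
        then show "N $$ (i, j) = 0"
        proof cases
          case 1
          have "M $$ (m, j) = cnj (M $$ (j, m))" using psd_herm_entry[OF p m ij(2)] .
          then show ?thesis using 1 Nij[OF ij(1,2)] r0 by (simp add: v_def p0r[unfolded p0_def])
        next
          case 2
          then show ?thesis using Nij[OF ij(1,2)] r0 by (simp add: v_def p0r[unfolded p0_def])
        next
          case 3
          then show ?thesis using Nij[OF ij(1,2)] vz[OF ij(1)] supp ij by simp
        next
          case 4
          then show ?thesis using Nij[OF ij(1,2)] vz[OF ij(2)] supp ij by simp
        qed
      qed
      have "\<exists>f. \<forall>i<n. \<forall>j<n. N $$ (i, j) = (\<Sum>k<m. f k i * cnj (f k j))"
        using spec[OF Suc.IH, of N] pN Suc_leD[OF mn] suppN by blast
      then obtain f where f: "\<forall>i<n. \<forall>j<n. N $$ (i, j) = (\<Sum>k<m. f k i * cnj (f k j))" by blast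
      show ?thesis
      proof (rule exI[of _ "f(m := v)"], intro allI impI)
        fix i j assume ij: "i < n" "j < n"
        have "M $$ (i, j) = N $$ (i, j) + v i * cnj (v j)" using Nij[OF ij] by simp
        then show "M $$ (i, j) = (\<Sum>k<Suc m. (f(m := v)) k i * cnj ((f(m := v)) k j))"
          using f ij by simp
      qed
    qed
  qed
qed

lemma psd_decomp:
  assumes p: "psd n M"
  shows "\<exists>Y \<in> carrier_mat n n. M = Y * adj Y"
proof -
  have "\<exists>f. \<forall>i<n. \<forall>j<n. M $$ (i, j) = (\<Sum>k<n. f k i * cnj (f k j))"
    using spec[OF decomp_aux[of n n], of M] p by simp
  then obtain f where f: "\<forall>i<n. \<forall>j<n. M $$ (i, j) = (\<Sum>k<n. f k i * cnj (f k j))" by blast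
  define Y where "Y = mat n n (\<lambda>(i, k). f k i)"
  have cY: "Y \<in> carrier_mat n n" by (simp add: Y_def)
  have "M = Y * adj Y"
  proof (rule eq_matI)
    fix i j assume "i < dim_row (Y * adj Y)" "j < dim_col (Y * adj Y)"
    then have ij: "i < n" "j < n" using cY by auto
    show "M $$ (i, j) = (Y * adj Y) $$ (i, j)"
      using f ij cY by (subst mult_entry[OF cY adj_carrier[OF cY] ij]) (simp add: Y_def)
  qed (use cY psd_carrier[OF p] in simp_all)
  then show ?thesis using cY by blast
qed


section \<open>psd closure\<close>

lemma psd_zero: "psd n (0\<^sub>m n n)"
  unfolding psd_def by (simp add: sq_def)

lemma psd_add: assumes "psd n A" "psd n B" shows "psd n (A + B)"
proof -
  have c: "A \<in> carrier_mat n n" "B \<in> carrier_mat n n" using assms by (auto intro: psd_carrier)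
  show ?thesis unfolding psd_def
    using c adj_add[OF c] psd_adj[OF assms(1)] psd_adj[OF assms(2)] sq_add[OF c]
      psd_sq[OF assms(1)] psd_sq[OF assms(2)] by (simp add: add_nonneg_nonneg)
qed

lemma psd_smult: assumes "psd n A" "0 \<le> c" shows "psd n (complex_of_real c \<cdot>\<^sub>m A)"
proof -
  have c: "A \<in> carrier_mat n n" using assms by (auto intro: psd_carrier)
  show ?thesis unfolding psd_def
    using c adj_smult psd_adj[OF assms(1)] sq_smult[OF c] psd_sq[OF assms(1)] assms(2)
    by simp
qed

lemma psd_one: "psd n (1\<^sub>m n)"
proof -
  have "sq (1\<^sub>m n) x x = (\<Sum>i<n. cnj (x i) * x i)" for x
  proof -
    have "sq (1\<^sub>m n) x x = (\<Sum>i<n. \<Sum>j<n. if j = i then cnj (x i) * x i else 0)"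
      unfolding sq_n[OF one_carrier_mat] by (intro sum.cong refl) auto
    then show ?thesis by simp
  qed
  moreover have "0 \<le> Re (cnj (x i) * x i)" for x i
    using complex_norm_square[of "x i"] by (simp add: mult.commute)
  ultimately show ?thesis unfolding psd_def by (simp add: sum_nonneg)
qed

lemma sum4_swap:
  "(\<Sum>l<n. \<Sum>m<n. \<Sum>i<n. \<Sum>j<n. T i j l m) = (\<Sum>i<n. \<Sum>j<n. \<Sum>l<n. \<Sum>m<n. (T i j l m :: complex))"
proof -
  have s1: "(\<Sum>m<n. \<Sum>i<n. \<Sum>j<n. T i j l m) = (\<Sum>i<n. \<Sum>m<n. \<Sum>j<n. T i j l m)" for l
    by (rule sum.swap)
  have s3: "(\<Sum>m<n. \<Sum>j<n. T i j l m) = (\<Sum>j<n. \<Sum>m<n. T i j l m)" for i l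
    by (rule sum.swap)
  have s4: "(\<Sum>l<n. \<Sum>j<n. \<Sum>m<n. T i j l m) = (\<Sum>j<n. \<Sum>l<n. \<Sum>m<n. T i j l m)" for i
    by (rule sum.swap)
  have "(\<Sum>l<n. \<Sum>m<n. \<Sum>i<n. \<Sum>j<n. T i j l m) = (\<Sum>l<n. \<Sum>i<n. \<Sum>m<n. \<Sum>j<n. T i j l m)"
    by (simp only: s1)
  also have "\<dots> = (\<Sum>i<n. \<Sum>l<n. \<Sum>m<n. \<Sum>j<n. T i j l m)" by (rule sum.swap)
  also have "\<dots> = (\<Sum>i<n. \<Sum>l<n. \<Sum>j<n. \<Sum>m<n. T i j l m)"
    by (simp only: s3)
  also have "\<dots> = (\<Sum>i<n. \<Sum>j<n. \<Sum>l<n. \<Sum>m<n. T i j l m)"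
    by (simp only: s4)
  finally show ?thesis .
qed

lemma sq_congr:
  assumes cY: "Y \<in> carrier_mat n n" and cA: "A \<in> carrier_mat n n"
  shows "sq (Y * A * adj Y) x x = sq A (\<lambda>l. \<Sum>i<n. cnj (Y $$ (i, l)) * x i) (\<lambda>l. \<Sum>i<n. cnj (Y $$ (i, l)) * x i)"
proof -
  let ?T = "\<lambda>i j l m. cnj (x i) * Y $$ (i, l) * A $$ (l, m) * cnj (Y $$ (j, m)) * x j"
  have cYA: "Y * A \<in> carrier_mat n n" using cY cA by simp
  have cC: "Y * A * adj Y \<in> carrier_mat n n" using cYA cY by simp
  have ent: "(Y * A * adj Y) $$ (i, j) = (\<Sum>m<n. (\<Sum>l<n. Y $$ (i, l) * A $$ (l, m)) * cnj (Y $$ (j, m)))"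
    if "i < n" "j < n" for i j
    using that cY cA cYA by (simp add: mult_entry[OF cYA adj_carrier[OF cY]] mult_entry[OF cY cA] del: index_mult_mat(1))
  have "sq (Y * A * adj Y) x x = (\<Sum>i<n. \<Sum>j<n. \<Sum>l<n. \<Sum>m<n. ?T i j l m)"
  proof -
    have "sq (Y * A * adj Y) x x = (\<Sum>i<n. \<Sum>j<n. \<Sum>m<n. \<Sum>l<n. ?T i j l m)"
      unfolding sq_n[OF cC]
      by (intro sum.cong refl) (simp add: ent sum_distrib_left sum_distrib_right mult.assoc)
    also have "\<dots> = (\<Sum>i<n. \<Sum>j<n. \<Sum>l<n. \<Sum>m<n. ?T i j l m)"
    proof -
      have e: "(\<Sum>m<n. \<Sum>l<n. ?T i j l m) = (\<Sum>l<n. \<Sum>m<n. ?T i j l m)" for i j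
        by (rule sum.swap)
      show ?thesis by (simp only: e)
    qed
    finally show ?thesis .
  qed
  also have "\<dots> = (\<Sum>l<n. \<Sum>m<n. \<Sum>i<n. \<Sum>j<n. ?T i j l m)" by (rule sum4_swap[symmetric])
  also have "\<dots> = (\<Sum>l<n. \<Sum>m<n. cnj (\<Sum>i<n. cnj (Y $$ (i, l)) * x i) * A $$ (l, m) * (\<Sum>j<n. cnj (Y $$ (j, m)) * x j))"
  proof (rule sum.cong[OF refl], rule sum.cong[OF refl])
    fix l m
    show "(\<Sum>i<n. \<Sum>j<n. ?T i j l m) = cnj (\<Sum>i<n. cnj (Y $$ (i, l)) * x i) * A $$ (l, m) * (\<Sum>j<n. cnj (Y $$ (j, m)) * x j)"
      by (simp add: sum_conjugate[where 'a=complex, simplified] sum_distrib_left sum_distrib_right mult_ac)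
  qed
  also have "\<dots> = sq A (\<lambda>l. \<Sum>i<n. cnj (Y $$ (i, l)) * x i) (\<lambda>l. \<Sum>i<n. cnj (Y $$ (i, l)) * x i)"
    unfolding sq_n[OF cA] by simp
  finally show ?thesis .
qed

lemma psd_congr:
  assumes p: "psd n A" and cY: "Y \<in> carrier_mat n n"
  shows "psd n (Y * A * adj Y)"
proof -
  have cA: "A \<in> carrier_mat n n" using p by (rule psd_carrier)
  have "adj (Y * A * adj Y) = adj (adj Y) * adj (Y * A)"
    using cY cA by (simp add: adj_mult[of _ n n _ n])
  also have "\<dots> = Y * (A * adj Y)" using cY cA psd_adj[OF p] by (simp add: adj_mult[of _ n n _ n])
  also have "\<dots> = Y * A * adj Y" using cY cA by (simp add: assoc_mult_mat[of _ n n _ n _ n])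
  finally have h: "adj (Y * A * adj Y) = Y * A * adj Y" .
  have cYA: "Y * A \<in> carrier_mat n n" using cY cA by simp
  have cC: "Y * A * adj Y \<in> carrier_mat n n" using cYA cY by simp
  show ?thesis unfolding psd_def using h cC sq_congr[OF cY cA] psd_sq[OF p] by simp
qed

lemma trace_psd_mult:
  assumes pA: "psd n A" and pB: "psd n B"
  shows "0 \<le> Re (mat_trace (A * B))"
proof -
  obtain Y where cY: "Y \<in> carrier_mat n n" and B: "B = Y * adj Y" using psd_decomp[OF pB] by blast
  have cA: "A \<in> carrier_mat n n" using pA by (rule psd_carrier)
  have cB: "B \<in> carrier_mat n n" using pB by (rule psd_carrier)
  have Bij: "B $$ (j, i) = (\<Sum>k<n. Y $$ (j, k) * cnj (Y $$ (i, k)))" if "i < n" "j < n" for i j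
    using that cY unfolding B by (subst mult_entry[OF cY adj_carrier[OF cY]]) simp_all
  have "mat_trace (A * B) = (\<Sum>i<n. (A * B) $$ (i, i))" using cA cB by (simp add: mat_trace_def)
  also have "\<dots> = (\<Sum>i<n. \<Sum>j<n. A $$ (i, j) * B $$ (j, i))"
    using cA cB by (intro sum.cong refl) (subst mult_entry[OF cA cB]; simp)
  also have "\<dots> = (\<Sum>i<n. \<Sum>j<n. \<Sum>k<n. cnj (Y $$ (i, k)) * A $$ (i, j) * Y $$ (j, k))"
    by (intro sum.cong refl) (simp add: Bij sum_distrib_left mult.commute mult.left_commute)
  also have "\<dots> = (\<Sum>i<n. \<Sum>k<n. \<Sum>j<n. cnj (Y $$ (i, k)) * A $$ (i, j) * Y $$ (j, k))"
  proof -
    have e: "(\<Sum>j<n. \<Sum>k<n. cnj (Y $$ (i, k)) * A $$ (i, j) * Y $$ (j, k)) = (\<Sum>k<n. \<Sum>j<n. cnj (Y $$ (i, k)) * A $$ (i, j) * Y $$ (j, k))" for i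
      by (rule sum.swap)
    show ?thesis by (simp only: e)
  qed
  also have "\<dots> = (\<Sum>k<n. \<Sum>i<n. \<Sum>j<n. cnj (Y $$ (i, k)) * A $$ (i, j) * Y $$ (j, k))"
    by (rule sum.swap)
  also have "\<dots> = (\<Sum>k<n. sq A (\<lambda>i. Y $$ (i, k)) (\<lambda>i. Y $$ (i, k)))"
    unfolding sq_n[OF cA] by simp
  finally have "Re (mat_trace (A * B)) = (\<Sum>k<n. Re (sq A (\<lambda>i. Y $$ (i, k)) (\<lambda>i. Y $$ (i, k))))"
    by simp
  also have "\<dots> \<ge> 0" using psd_sq[OF pA] by (intro sum_nonneg) auto
  finally show ?thesis .
qed


section \<open>The trace form F\<close>

definition F :: "complex mat \<Rightarrow> complex mat \<Rightarrow> complex mat \<Rightarrow> complex" where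
  "F \<rho> U V = mat_trace (U * \<rho> * adj V)"

lemma sq_expand:
  assumes p: "psd n M"
  shows "Re (sq M (\<lambda>i. x i + l * y i) (\<lambda>i. x i + l * y i)) =
      Re (sq M x x) + 2 * Re (l * sq M x y) + (cmod l)\<^sup>2 * Re (sq M y y)"
proof -
  have c: "M \<in> carrier_mat n n" using p by (rule psd_carrier)
  have yx: "sq M y x = cnj (sq M x y)" using sq_herm[OF c psd_adj[OF p]] .
  have "sq M (\<lambda>i. x i + l * y i) (\<lambda>i. x i + l * y i) =
      sq M x x + l * sq M x y + cnj l * (cnj (sq M x y) + l * sq M y y)"
    by (simp add: sq_lin_left[OF c] sq_lin_right[OF c] yx)
  also have "\<dots> = sq M x x + (l * sq M x y + cnj (l * sq M x y)) + (cnj l * l) * sq M y y"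
    by (simp add: algebra_simps)
  also have "cnj l * l = complex_of_real ((cmod l)\<^sup>2)"
    using complex_norm_square[of l] by (simp add: mult.commute)
  finally show ?thesis by simp
qed

lemma sqm_carrier[simp]: "A \<in> carrier_mat n n \<Longrightarrow> B \<in> carrier_mat n n \<Longrightarrow> A * B \<in> carrier_mat n n"
  by (rule mult_carrier_mat)

lemma adjm_carrier[simp]: "A \<in> carrier_mat n n \<Longrightarrow> adj A \<in> carrier_mat n n"
  by (rule adj_carrier)

lemma F_entry:
  assumes c\<rho>: "\<rho> \<in> carrier_mat n n" and cU: "U \<in> carrier_mat n n" and cV: "V \<in> carrier_mat n n"
  shows "F \<rho> U V = (\<Sum>i<n. sq \<rho> (\<lambda>j. cnj (U $$ (i, j))) (\<lambda>j. cnj (V $$ (i, j))))"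
proof -
  have cUr: "U * \<rho> \<in> carrier_mat n n" using cU c\<rho> by simp
  have cC: "U * \<rho> * adj V \<in> carrier_mat n n" using cUr cV by simp
  have "F \<rho> U V = (\<Sum>i<n. (U * \<rho> * adj V) $$ (i, i))"
    using cC cU by (simp add: F_def mat_trace_def)
  also have "\<dots> = (\<Sum>i<n. \<Sum>k<n. (\<Sum>j<n. U $$ (i, j) * \<rho> $$ (j, k)) * cnj (V $$ (i, k)))"
    using cUr cV cU c\<rho>
    by (intro sum.cong refl) (simp add: mult_entry[OF cUr adj_carrier[OF cV]] mult_entry[OF cU c\<rho>] del: index_mult_mat(1))
  also have "\<dots> = (\<Sum>i<n. \<Sum>j<n. \<Sum>k<n. U $$ (i, j) * \<rho> $$ (j, k) * cnj (V $$ (i, k)))"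
  proof -
    have e: "(\<Sum>k<n. (\<Sum>j<n. U $$ (i, j) * \<rho> $$ (j, k)) * cnj (V $$ (i, k))) =
        (\<Sum>j<n. \<Sum>k<n. U $$ (i, j) * \<rho> $$ (j, k) * cnj (V $$ (i, k)))" for i
      unfolding sum_distrib_right by (rule sum.swap)
    show ?thesis by (simp only: e)
  qed
  also have "\<dots> = (\<Sum>i<n. sq \<rho> (\<lambda>j. cnj (U $$ (i, j))) (\<lambda>j. cnj (V $$ (i, j))))"
    unfolding sq_n[OF c\<rho>] by simp
  finally show ?thesis .
qed

lemma F_add_left:
  assumes c: "\<rho> \<in> carrier_mat n n" "U1 \<in> carrier_mat n n" "U2 \<in> carrier_mat n n" "V \<in> carrier_mat n n"
  shows "F \<rho> (U1 + U2) V = F \<rho> U1 V + F \<rho> U2 V"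
proof -
  have c1: "U1 * \<rho> \<in> carrier_mat n n" "U2 * \<rho> \<in> carrier_mat n n" using c by auto
  have "(U1 + U2) * \<rho> * adj V = U1 * \<rho> * adj V + U2 * \<rho> * adj V"
    using c c1 by (simp add: add_mult_distrib_mat[OF c(2) c(3) c(1)]
        add_mult_distrib_mat[OF c1(1) c1(2) adj_carrier[OF c(4)]])
  moreover have "U1 * \<rho> * adj V \<in> carrier_mat n n" "U2 * \<rho> * adj V \<in> carrier_mat n n" using c by auto
  ultimately show ?thesis unfolding F_def by (simp add: trace_add)
qed

lemma F_add_right:
  assumes c: "\<rho> \<in> carrier_mat n n" "U \<in> carrier_mat n n" "V1 \<in> carrier_mat n n" "V2 \<in> carrier_mat n n"
  shows "F \<rho> U (V1 + V2) = F \<rho> U V1 + F \<rho> U V2"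
proof -
  have c1: "U * \<rho> \<in> carrier_mat n n" using c by auto
  have "U * \<rho> * adj (V1 + V2) = U * \<rho> * adj V1 + U * \<rho> * adj V2"
    using c c1 by (simp add: adj_add[OF c(3) c(4)]
        mult_add_distrib_mat[OF c1 adj_carrier[OF c(3)] adj_carrier[OF c(4)]])
  moreover have "U * \<rho> * adj V1 \<in> carrier_mat n n" "U * \<rho> * adj V2 \<in> carrier_mat n n" using c by auto
  ultimately show ?thesis unfolding F_def by (simp add: trace_add)
qed

lemma F_herm:
  assumes p: "psd n \<rho>" and cU: "U \<in> carrier_mat n n" and cV: "V \<in> carrier_mat n n"
  shows "F \<rho> V U = cnj (F \<rho> U V)"
proof -
  have c\<rho>: "\<rho> \<in> carrier_mat n n" using p by (rule psd_carrier)
  have "adj (U * \<rho> * adj V) = adj (adj V) * adj (U * \<rho>)"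
    using cU cV c\<rho> by (simp add: adj_mult[of _ n n _ n])
  also have "\<dots> = V * (\<rho> * adj U)"
    using cU cV c\<rho> psd_adj[OF p] by (simp add: adj_mult[of _ n n _ n])
  also have "\<dots> = V * \<rho> * adj U" using assoc_mult_mat[OF cV c\<rho> adj_carrier[OF cU]] by simp
  finally have e: "adj (U * \<rho> * adj V) = V * \<rho> * adj U" .
  have "U * \<rho> * adj V \<in> carrier_mat n n" using cU cV c\<rho> by simp
  then show ?thesis unfolding F_def
    using trace_adj[of "U * \<rho> * adj V" n] e by simp
qed

lemma F_pos:
  assumes p: "psd n \<rho>" and cU: "U \<in> carrier_mat n n"
  shows "0 \<le> Re (F \<rho> U U)"
  unfolding F_def using psd_trace[OF psd_congr[OF p cU]] .

lemma F_cs: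
  assumes p: "psd n \<rho>" and cU: "U \<in> carrier_mat n n" and cV: "V \<in> carrier_mat n n"
  shows "(cmod (F \<rho> U V))\<^sup>2 \<le> Re (F \<rho> U U) * Re (F \<rho> V V)"
proof (rule cs_scalar)
  have c\<rho>: "\<rho> \<in> carrier_mat n n" using p by (rule psd_carrier)
  show "0 \<le> Re (F \<rho> U U)" "0 \<le> Re (F \<rho> V V)" using F_pos[OF p] cU cV by auto
  fix l :: complex
  define x where "x i = (\<lambda>j. cnj (U $$ (i, j)))" for i
  define y where "y i = (\<lambda>j. cnj (V $$ (i, j)))" for i
  have "0 \<le> (\<Sum>i<n. Re (sq \<rho> (\<lambda>j. x i j + l * y i j) (\<lambda>j. x i j + l * y i j)))"
    using psd_sq[OF p] by (intro sum_nonneg) auto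
  also have "\<dots> = (\<Sum>i<n. Re (sq \<rho> (x i) (x i)) + 2 * Re (l * sq \<rho> (x i) (y i)) + (cmod l)\<^sup>2 * Re (sq \<rho> (y i) (y i)))"
    by (intro sum.cong refl) (rule sq_expand[OF p])
  also have "\<dots> = Re (F \<rho> U U) + 2 * Re (l * F \<rho> U V) + (cmod l)\<^sup>2 * Re (F \<rho> V V)"
    unfolding F_entry[OF c\<rho> cU cU] F_entry[OF c\<rho> cU cV] F_entry[OF c\<rho> cV cV] x_def y_def
    by (simp add: sum.distrib sum_distrib_left)
  finally show "0 \<le> Re (F \<rho> U U) + 2 * Re (l * F \<rho> U V) + (cmod l)\<^sup>2 * Re (F \<rho> V V)" .
qed


lemma trace_le_P:
  assumes pX: "psd n X" and pIP: "psd n (1\<^sub>m n - P)" and cP: "P \<in> carrier_mat n n"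
  shows "Re (mat_trace (P * X)) \<le> Re (mat_trace X)"
proof -
  have cX: "X \<in> carrier_mat n n" using pX by (rule psd_carrier)
  have "0 \<le> Re (mat_trace ((1\<^sub>m n - P) * X))" by (rule trace_psd_mult[OF pIP pX])
  also have "(1\<^sub>m n - P) * X = X - P * X"
    using minus_mult_distrib_mat[OF one_carrier_mat cP cX] cX by simp
  also have "mat_trace (X - P * X) = mat_trace X - mat_trace (P * X)"
    using cX cP by (intro trace_minus) auto
  finally show ?thesis by simp
qed

lemma core:
  assumes p\<rho>: "psd n \<rho>" and pP: "psd n P" and pIP: "psd n (1\<^sub>m n - P)"
    and cR: "R \<in> carrier_mat n n" and hR: "adj R = R" and cG: "G \<in> carrier_mat n n"
    and d: "0 < d" and pG: "psd n (complex_of_real d \<cdot>\<^sub>m G - \<rho>)"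
    and eta: "Re (mat_trace ((1\<^sub>m n - R) * \<rho> * (1\<^sub>m n - R))) \<le> \<eta>"
    and rr: "Re (mat_trace (R * \<rho> * R)) \<le> 1"
  shows "Re (mat_trace (P * \<rho>)) - \<eta> - 2 * sqrt \<eta> \<le> d * Re (mat_trace (P * (R * G * R)))"
proof -
  have c\<rho>: "\<rho> \<in> carrier_mat n n" using p\<rho> by (rule psd_carrier)
  have cP: "P \<in> carrier_mat n n" using pP by (rule psd_carrier)
  obtain Z where cZ: "Z \<in> carrier_mat n n" and PZ: "P = Z * adj Z" using psd_decomp[OF pP] by blast
  have cZa: "adj Z \<in> carrier_mat n n" using cZ by simp
  define S where "S = 1\<^sub>m n - R"
  have cS: "S \<in> carrier_mat n n" unfolding S_def using cR by (simp add: minus_carrier_mat)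
  have hS: "adj S = S" unfolding S_def using adj_minus[OF one_carrier_mat cR] hR by simp
  have tP: "mat_trace (P * X) = mat_trace (adj Z * X * Z)" if cX: "X \<in> carrier_mat n n" for X
  proof -
    have e1: "P * X = Z * (adj Z * X)" unfolding PZ using assoc_mult_mat[OF cZ cZa cX] .
    have e2: "mat_trace (Z * (adj Z * X)) = mat_trace (adj Z * X * Z)"
      using trace_comm[OF cZ mult_carrier_mat[OF cZa cX]] .
    show ?thesis unfolding e1 by (rule e2)
  qed
  have FZ: "F \<rho> (adj Z * A) (adj Z * A) = mat_trace (P * (A * \<rho> * adj A))"
    if cA: "A \<in> carrier_mat n n" for A
  proof -
    have "F \<rho> (adj Z * A) (adj Z * A) = mat_trace (adj Z * A * \<rho> * (adj A * Z))"
      unfolding F_def using cA cZ by (simp add: adj_mult[of _ n n _ n])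
    also have "adj Z * A * \<rho> * (adj A * Z) = adj Z * (A * \<rho> * adj A) * Z"
      using cA cZ c\<rho> by (simp add: assoc_mult_mat[of _ n n _ n _ n])
    also have "mat_trace \<dots> = mat_trace (P * (A * \<rho> * adj A))"
      using tP[of "A * \<rho> * adj A"] cA c\<rho> by simp
    finally show ?thesis .
  qed
  define UR where "UR = adj Z * R"
  define US where "US = adj Z * S"
  have cUR: "UR \<in> carrier_mat n n" and cUS: "US \<in> carrier_mat n n"
    unfolding UR_def US_def using cZ cR cS by auto
  have split: "adj Z = UR + US"
  proof -
    have "US = adj Z - UR" unfolding US_def UR_def S_def
      using mult_minus_distrib_mat[OF cZa one_carrier_mat cR] cZa cZ by simp
    then show ?thesis by (rule_tac eq_matI) (use cUR cZa cZ in simp_all)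
  qed
  have FRR: "F \<rho> UR UR = mat_trace (P * (R * \<rho> * R))"
    unfolding UR_def using FZ[OF cR] hR by simp
  have FSS: "F \<rho> US US = mat_trace (P * (S * \<rho> * S))"
    unfolding US_def using FZ[OF cS] hS by simp
  have F11: "F \<rho> (adj Z) (adj Z) = mat_trace (P * \<rho>)"
    using FZ[OF one_carrier_mat] cZa cZ c\<rho> by simp
  have pRR: "psd n (R * \<rho> * R)" using psd_congr[OF p\<rho> cR] hR by simp
  have pSS: "psd n (S * \<rho> * S)" using psd_congr[OF p\<rho> cS] hS by simp
  define a where "a = Re (F \<rho> UR UR)"
  define c where "c = Re (F \<rho> US US)"
  define b where "b = F \<rho> UR US"
  have a0: "0 \<le> a" unfolding a_def by (rule F_pos[OF p\<rho> cUR])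
  have c0: "0 \<le> c" unfolding c_def by (rule F_pos[OF p\<rho> cUS])
  have a1: "a \<le> 1" unfolding a_def FRR using trace_le_P[OF pRR pIP cP] rr by simp
  have c1: "c \<le> \<eta>" unfolding c_def FSS using trace_le_P[OF pSS pIP cP] eta by (simp add: S_def)
  have "F \<rho> (adj Z) (adj Z) = F \<rho> UR UR + b + cnj b + F \<rho> US US"
    unfolding split b_def
    using F_add_left[OF c\<rho> cUR cUS] F_add_right[OF c\<rho> cUR cUR cUS] F_add_right[OF c\<rho> cUS cUR cUS]
      F_herm[OF p\<rho> cUR cUS] cUR cUS by (simp add: add_carrier_mat)
  then have t: "Re (mat_trace (P * \<rho>)) = a + 2 * Re b + c"
    using F11 unfolding a_def c_def by simp
  have "(cmod b)\<^sup>2 \<le> a * c" unfolding a_def b_def c_def by (rule F_cs[OF p\<rho> cUR cUS])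
  then have "cmod b \<le> sqrt (a * c)" by (simp add: real_le_rsqrt)
  also have "sqrt (a * c) \<le> sqrt \<eta>"
    using a0 a1 c0 c1 by (intro real_sqrt_le_mono) (metis mult_le_one mult_left_le order_trans mult.commute mult_right_mono)
  finally have rb: "Re b \<le> sqrt \<eta>" using complex_Re_le_cmod[of b] by linarith
  have cRG: "R * G * R \<in> carrier_mat n n" and cRr: "R * \<rho> * R \<in> carrier_mat n n"
    using cR cG c\<rho> by auto
  have "0 \<le> Re (mat_trace (P * (R * (complex_of_real d \<cdot>\<^sub>m G - \<rho>) * adj R)))"
    by (rule trace_psd_mult[OF pP psd_congr[OF pG cR]])
  also have "R * (complex_of_real d \<cdot>\<^sub>m G - \<rho>) * adj R = complex_of_real d \<cdot>\<^sub>m (R * G * R) - R * \<rho> * R"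
  proof -
    have cdG: "complex_of_real d \<cdot>\<^sub>m G \<in> carrier_mat n n" using cG by simp
    have cRG: "R * G \<in> carrier_mat n n" "R * \<rho> \<in> carrier_mat n n" using cR cG c\<rho> by auto
    have "R * (complex_of_real d \<cdot>\<^sub>m G - \<rho>) = complex_of_real d \<cdot>\<^sub>m (R * G) - R * \<rho>"
      using mult_minus_distrib_mat[OF cR cdG c\<rho>] mult_smult_distrib[OF cR cG] by simp
    then have "R * (complex_of_real d \<cdot>\<^sub>m G - \<rho>) * adj R = (complex_of_real d \<cdot>\<^sub>m (R * G) - R * \<rho>) * R"
      using hR by simp
    also have "\<dots> = complex_of_real d \<cdot>\<^sub>m (R * G * R) - R * \<rho> * R"
      using minus_mult_distrib_mat[OF _ cRG(2) cR, of "complex_of_real d \<cdot>\<^sub>m (R * G)"] cRG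
        mult_smult_assoc_mat[OF cRG(1) cR] by simp
    finally show ?thesis .
  qed
  also have "P * (complex_of_real d \<cdot>\<^sub>m (R * G * R) - R * \<rho> * R) =
      complex_of_real d \<cdot>\<^sub>m (P * (R * G * R)) - P * (R * \<rho> * R)"
    using mult_minus_distrib_mat[OF cP _ cRr, of "complex_of_real d \<cdot>\<^sub>m (R * G * R)"] cRG
      mult_smult_distrib[OF cP cRG] by simp
  also have "mat_trace \<dots> = complex_of_real d * mat_trace (P * (R * G * R)) - mat_trace (P * (R * \<rho> * R))"
    using cP cRG cRr by (simp add: trace_minus[of _ n] trace_smult[of "P * (R * G * R)" n])
  finally have "a \<le> d * Re (mat_trace (P * (R * G * R)))" unfolding a_def FRR by simp
  then show ?thesis using t rb c1 by linarith
qed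



lemma re_cnj_mult: "Re (cnj z * z) = (cmod z)\<^sup>2"
  using cmod_power2[of z] by (simp add: power2_eq_square)


lemma sq_one: "sq (1\<^sub>m n) x x = (\<Sum>i<n. cnj (x i) * x i)"
proof -
  have "sq (1\<^sub>m n) x x = (\<Sum>i<n. \<Sum>j<n. if j = i then cnj (x i) * x i else 0)"
    unfolding sq_n[OF one_carrier_mat] by (intro sum.cong refl) auto
  then show ?thesis by simp
qed

lemma inverse_exists:
  fixes \<delta> :: real
  assumes p: "psd m \<sigma>" and d: "0 < \<delta>"
  shows "\<exists>M \<in> carrier_mat m m. M * (\<sigma> + complex_of_real \<delta> \<cdot>\<^sub>m 1\<^sub>m m) = 1\<^sub>m m \<and>
     (\<sigma> + complex_of_real \<delta> \<cdot>\<^sub>m 1\<^sub>m m) * M = 1\<^sub>m m"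
proof -
  define A where "A = \<sigma> + complex_of_real \<delta> \<cdot>\<^sub>m 1\<^sub>m m"
  have c\<sigma>: "\<sigma> \<in> carrier_mat m m" using p by (rule psd_carrier)
  have cA: "A \<in> carrier_mat m m" unfolding A_def using c\<sigma> by simp
  have "det A \<noteq> 0"
  proof
    assume "det A = 0"
    then obtain v where v: "v \<in> carrier_vec m" "v \<noteq> 0\<^sub>v m" "A *\<^sub>v v = 0\<^sub>v m"
      using det_0_iff_vec_prod_zero_field[OF cA] by blast
    define x where "x i = v $ i" for i
    have vx: "v = vec m x" using v(1) unfolding x_def by auto
    have "sq A x x = conjugate (vec m x) \<bullet> (A *\<^sub>v vec m x)" using sq_vec[OF cA] by simp
    also have "\<dots> = 0" using v(3) vx by simp
    finally have z: "sq A x x = 0" .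
    obtain i where i: "i < m" "v $ i \<noteq> 0"
    proof (rule ccontr)
      assume "\<not> thesis"
      then have "\<forall>i<m. v $ i = 0" using that by blast
      then have "v = 0\<^sub>v m" using v(1) by (intro eq_vecI) auto
      then show False using v(2) by simp
    qed
    have pos: "0 \<le> Re (cnj (x k) * x k)" for k
      unfolding re_cnj_mult by simp
    have "0 < Re (cnj (x i) * x i)"
      unfolding re_cnj_mult using i x_def by simp
    also have "\<dots> \<le> (\<Sum>k<m. Re (cnj (x k) * x k))"
      using i pos by (intro member_le_sum) auto
    also have "\<dots> = Re (sq (1\<^sub>m m) x x)" by (simp add: sq_one)
    finally have "0 < Re (sq (1\<^sub>m m) x x)" .
    moreover have "sq A x x = sq \<sigma> x x + complex_of_real \<delta> * sq (1\<^sub>m m) x x"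
      unfolding A_def using c\<sigma> by (simp add: sq_add sq_smult[OF one_carrier_mat])
    ultimately have "0 < Re (sq A x x)" using psd_sq[OF p, of x] d by (simp add: add_nonneg_pos)
    then show False using z by simp
  qed
  from det_non_zero_imp_unit[OF cA this, of "()"]
  obtain B where "B \<in> carrier_mat m m" "B * A = 1\<^sub>m m" "A * B = 1\<^sub>m m"
    unfolding Units_def ring_mat_def by auto
  then show ?thesis unfolding A_def by blast
qed


lemma Qconstr:
  fixes \<delta> :: real
  assumes p: "psd m \<sigma>" and d: "0 < \<delta>"
  shows "\<exists>Q \<in> carrier_mat m m. adj Q = Q \<and> psd m (\<sigma> - complex_of_real \<delta> \<cdot>\<^sub>m (Q * Q)) \<and>
     Re (mat_trace (\<sigma> * (Q * Q))) \<le> Re (mat_trace \<sigma>) \<and>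
     Re (mat_trace (\<sigma> * ((1\<^sub>m m - Q) * (1\<^sub>m m - Q)))) \<le> real m * \<delta> / 4"
proof -
  define dc where "dc = complex_of_real \<delta>"
  have c\<sigma>: "\<sigma> \<in> carrier_mat m m" using p by (rule psd_carrier)
  obtain M where cM: "M \<in> carrier_mat m m" and hMA: "M * (\<sigma> + dc \<cdot>\<^sub>m 1\<^sub>m m) = 1\<^sub>m m"
    and hAM: "(\<sigma> + dc \<cdot>\<^sub>m 1\<^sub>m m) * M = 1\<^sub>m m"
    using inverse_exists[OF p d] unfolding dc_def by blast
  note N = assoc_mult_mat[of _ m m _ m _ m]
    add_mult_distrib_mat[where nr=m and n=m and nc=m] mult_add_distrib_mat[where nr=m and n=m and nc=m]
    minus_mult_distrib_mat[where nr=m and n=m and nc=m] mult_minus_distrib_mat[where nr=m and n=m and nc=m]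
    mult_smult_distrib[where nr=m and n=m and nc=m] mult_smult_assoc_mat[where nr=m and n=m and nc=m]
  have e1: "M * \<sigma> + dc \<cdot>\<^sub>m M = 1\<^sub>m m"
    using hMA cM c\<sigma> by (simp add: N)
  have h1: "M * \<sigma> = 1\<^sub>m m - dc \<cdot>\<^sub>m M"
  proof (rule eq_matI)
    fix i j assume ij: "i < dim_row (1\<^sub>m m - dc \<cdot>\<^sub>m M)" "j < dim_col (1\<^sub>m m - dc \<cdot>\<^sub>m M)"
    then have ij': "i < m" "j < m" using cM by auto
    have "(M * \<sigma> + dc \<cdot>\<^sub>m M) $$ (i, j) = 1\<^sub>m m $$ (i, j)" using e1 by simp
    then show "(M * \<sigma>) $$ (i, j) = (1\<^sub>m m - dc \<cdot>\<^sub>m M) $$ (i, j)"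
      using ij' cM c\<sigma> by (simp del: index_mult_mat(1) add: algebra_simps)
  qed (use cM c\<sigma> in simp_all)
  have e2: "\<sigma> * M + dc \<cdot>\<^sub>m M = 1\<^sub>m m"
    using hAM cM c\<sigma> by (simp add: N)
  have h2: "\<sigma> * M = 1\<^sub>m m - dc \<cdot>\<^sub>m M"
  proof (rule eq_matI)
    fix i j assume ij: "i < dim_row (1\<^sub>m m - dc \<cdot>\<^sub>m M)" "j < dim_col (1\<^sub>m m - dc \<cdot>\<^sub>m M)"
    then have ij': "i < m" "j < m" using cM by auto
    have "(\<sigma> * M + dc \<cdot>\<^sub>m M) $$ (i, j) = 1\<^sub>m m $$ (i, j)" using e2 by simp
    then show "(\<sigma> * M) $$ (i, j) = (1\<^sub>m m - dc \<cdot>\<^sub>m M) $$ (i, j)"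
      using ij' cM c\<sigma> by (simp del: index_mult_mat(1) add: algebra_simps)
  qed (use cM c\<sigma> in simp_all)
  have h1': "M * (\<sigma> * X) = X - dc \<cdot>\<^sub>m (M * X)" if "X \<in> carrier_mat m m" for X
    using that c\<sigma> cM h1 by (simp add: N assoc_mult_mat[OF cM c\<sigma> that, symmetric])
  have h2': "\<sigma> * (M * X) = X - dc \<cdot>\<^sub>m (M * X)" if "X \<in> carrier_mat m m" for X
    using that c\<sigma> cM h2 by (simp add: N assoc_mult_mat[OF c\<sigma> cM that, symmetric])
  have cdc: "cnj dc = dc" by (simp add: dc_def)
  have adjA: "adj (\<sigma> + dc \<cdot>\<^sub>m 1\<^sub>m m) = \<sigma> + dc \<cdot>\<^sub>m 1\<^sub>m m"
    using adj_add[OF c\<sigma>, of "dc \<cdot>\<^sub>m 1\<^sub>m m"] psd_adj[OF p] cdc by (simp add: adj_smult)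
  have "adj M * (\<sigma> + dc \<cdot>\<^sub>m 1\<^sub>m m) = 1\<^sub>m m"
    using adj_mult[of "\<sigma> + dc \<cdot>\<^sub>m 1\<^sub>m m" m m M m] c\<sigma> cM hAM adjA by simp
  then have hM: "adj M = M"
    using assoc_mult_mat[of "adj M" m m "\<sigma> + dc \<cdot>\<^sub>m 1\<^sub>m m" m M m] hAM cM c\<sigma> by simp
  define Q where "Q = 1\<^sub>m m - dc \<cdot>\<^sub>m M"
  have cQ: "Q \<in> carrier_mat m m" unfolding Q_def using cM by (simp add: minus_carrier_mat)
  have hQ: "adj Q = Q" unfolding Q_def using adj_minus[OF one_carrier_mat, of "dc \<cdot>\<^sub>m M"] cM
    by (simp add: adj_smult cdc hM)
  have id1: "\<sigma> - dc \<cdot>\<^sub>m (Q * Q) = Q * \<sigma> * Q + dc \<cdot>\<^sub>m (Q * 1\<^sub>m m * Q) + (dc * dc) \<cdot>\<^sub>m (M * \<sigma> * M)"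
    unfolding Q_def using cM c\<sigma> h1 h2 h1' h2'
    apply (simp add: N minus_carrier_mat)
    apply (rule eq_matI)
     apply (simp_all del: index_mult_mat(1) add: algebra_simps)
    done
  have pd: "0 \<le> \<delta> * \<delta>" by simp
  have "psd m (Q * \<sigma> * adj Q + complex_of_real \<delta> \<cdot>\<^sub>m (Q * 1\<^sub>m m * adj Q) +
      complex_of_real (\<delta> * \<delta>) \<cdot>\<^sub>m (M * \<sigma> * adj M))"
    using d by (intro psd_add psd_smult psd_congr p psd_one cQ cM pd) auto
  then have P1: "psd m (\<sigma> - complex_of_real \<delta> \<cdot>\<^sub>m (Q * Q))"
    using id1 hQ hM by (simp add: dc_def)
  have id2: "1\<^sub>m m - Q * Q = (2 * dc) \<cdot>\<^sub>m (M * \<sigma> * M) + (dc * dc) \<cdot>\<^sub>m (M * 1\<^sub>m m * M)"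
    unfolding Q_def using cM c\<sigma> h1 h2 h1' h2'
    apply (simp add: N minus_carrier_mat)
    apply (rule eq_matI)
     apply (simp_all del: index_mult_mat(1) add: algebra_simps)
    done
  have p2d: "0 \<le> 2 * \<delta>" using d by simp
  have "psd m (complex_of_real (2 * \<delta>) \<cdot>\<^sub>m (M * \<sigma> * adj M) + complex_of_real (\<delta> * \<delta>) \<cdot>\<^sub>m (M * 1\<^sub>m m * adj M))"
    by (intro psd_add psd_smult psd_congr p psd_one cM pd p2d)
  then have P2: "psd m (1\<^sub>m m - Q * Q)" using id2 hM by (simp add: dc_def)
  have cQQ: "Q * Q \<in> carrier_mat m m" using cQ by simp
  have "0 \<le> Re (mat_trace (\<sigma> * (1\<^sub>m m - Q * Q)))" by (rule trace_psd_mult[OF p P2])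
  also have "\<sigma> * (1\<^sub>m m - Q * Q) = \<sigma> - \<sigma> * (Q * Q)"
    using mult_minus_distrib_mat[OF c\<sigma> one_carrier_mat cQQ] c\<sigma> by simp
  also have "mat_trace (\<sigma> - \<sigma> * (Q * Q)) = mat_trace \<sigma> - mat_trace (\<sigma> * (Q * Q))"
    using c\<sigma> cQQ by (intro trace_minus) auto
  finally have T2: "Re (mat_trace (\<sigma> * (Q * Q))) \<le> Re (mat_trace \<sigma>)" by simp
  define X where "X = 1\<^sub>m m - Q"
  have cX: "X \<in> carrier_mat m m" unfolding X_def using cQ by (simp add: minus_carrier_mat)
  define W where "W = 1\<^sub>m m - (2 * dc) \<cdot>\<^sub>m M"
  have cW: "W \<in> carrier_mat m m" unfolding W_def using cM by (simp add: minus_carrier_mat)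
  have hW: "adj W = W" unfolding W_def using adj_minus[OF one_carrier_mat, of "(2 * dc) \<cdot>\<^sub>m M"] cM
    by (simp add: adj_smult cdc hM)
  have id3: "complex_of_real (\<delta> / 4) \<cdot>\<^sub>m 1\<^sub>m m - X * \<sigma> * X = complex_of_real (\<delta> / 4) \<cdot>\<^sub>m (W * 1\<^sub>m m * W)"
    unfolding X_def Q_def W_def using cM c\<sigma> h1 h2 h1' h2'
    apply (simp add: N minus_carrier_mat)
    apply (rule eq_matI)
     apply (simp_all del: index_mult_mat(1) add: algebra_simps dc_def)
    done
  have "psd m (complex_of_real (\<delta> / 4) \<cdot>\<^sub>m (W * 1\<^sub>m m * adj W))"
    using d by (intro psd_smult psd_congr psd_one cW) auto
  then have "0 \<le> Re (mat_trace (complex_of_real (\<delta> / 4) \<cdot>\<^sub>m 1\<^sub>m m - X * \<sigma> * X))"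
    using id3 hW psd_trace by metis
  also have "mat_trace (complex_of_real (\<delta> / 4) \<cdot>\<^sub>m 1\<^sub>m m - X * \<sigma> * X) =
      complex_of_real (\<delta> / 4) * of_nat m - mat_trace (X * \<sigma> * X)"
    using cX c\<sigma> by (simp add: trace_minus[of _ m] trace_smult[of _ m] trace_one)
  finally have t3: "Re (mat_trace (X * \<sigma> * X)) \<le> real m * \<delta> / 4" by (simp add: mult.commute)
  have "mat_trace (\<sigma> * (X * X)) = mat_trace (X * \<sigma> * X)"
  proof -
    have "mat_trace (\<sigma> * (X * X)) = mat_trace ((\<sigma> * X) * X)"
      using assoc_mult_mat[OF c\<sigma> cX cX] by simp
    also have "\<dots> = mat_trace (X * (\<sigma> * X))"
      using trace_comm[of "\<sigma> * X" m m X] c\<sigma> cX by simp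
    also have "\<dots> = mat_trace (X * \<sigma> * X)" using assoc_mult_mat[OF cX c\<sigma> cX] by simp
    finally show ?thesis .
  qed
  then have T3: "Re (mat_trace (\<sigma> * ((1\<^sub>m m - Q) * (1\<^sub>m m - Q)))) \<le> real m * \<delta> / 4"
    using t3 unfolding X_def by simp
  show ?thesis using cQ hQ P1 T2 T3 by blast
qed



lemma sum_split:
  fixes a d :: nat
  shows "(\<Sum>k<a * d. f k) = (\<Sum>i<a. \<Sum>j<d. f (i * d + j))"
proof (induction a)
  case 0 then show ?case by simp
next
  case (Suc a)
  have "(\<Sum>k<Suc a * d. f k) = (\<Sum>k<a * d. f k) + (\<Sum>k = a * d..<a * d + d. f k)"
    by (simp add: lessThan_atLeast0 sum.atLeastLessThan_concat add.commute)
  also have "(\<Sum>k = a * d..<a * d + d. f k) = (\<Sum>j<d. f (a * d + j))"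
  proof -
    have "(\<Sum>k = a * d..<a * d + d. f k) = (\<Sum>k = 0 + a * d..<d + a * d. f k)" by (simp add: add.commute)
    also have "\<dots> = (\<Sum>j = 0..<d. f (j + a * d))" by (rule sum.shift_bounds_nat_ivl)
    finally show ?thesis by (simp add: lessThan_atLeast0 add.commute)
  qed
  finally show ?case using Suc by simp
qed

lemma ab_div: "b < d \<Longrightarrow> (a * d + b) div d = (a::nat)" by simp
lemma ab_mod: "b < d \<Longrightarrow> (a * d + b) mod d = (b::nat)" by simp

lemma kron_carrier[simp]: "kron dA dB X Y \<in> carrier_mat (dA * dB) (dA * dB)"
  by (simp add: kron_def)

lemma kron_dims[simp]: "dim_row (kron dA dB X Y) = dA * dB" "dim_col (kron dA dB X Y) = dA * dB"
  by (simp_all add: kron_def)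

lemma kron_index: "i < dA * dB \<Longrightarrow> j < dA * dB \<Longrightarrow>
   kron dA dB X Y $$ (i, j) = X $$ (i div dB, j div dB) * Y $$ (i mod dB, j mod dB)"
  by (simp add: kron_def)

lemma ab_lt: fixes a b dA dB :: nat assumes "a < dA" "b < dB" shows "a * dB + b < dA * dB"
proof -
  have "a * dB + b < a * dB + dB" using assms by simp
  also have "\<dots> = Suc a * dB" by simp
  also have "\<dots> \<le> dA * dB" using assms by (intro mult_le_mono1) simp
  finally show ?thesis .
qed

lemma kron_index': "a < dA \<Longrightarrow> b < dB \<Longrightarrow> a' < dA \<Longrightarrow> b' < dB \<Longrightarrow>
   kron dA dB X Y $$ (a * dB + b, a' * dB + b') = X $$ (a, a') * Y $$ (b, b')"
  by (simp add: kron_index ab_lt)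

lemma kron_mult:
  assumes X: "X \<in> carrier_mat dA dA" and Z: "Z \<in> carrier_mat dA dA"
    and Y: "Y \<in> carrier_mat dB dB" and W: "W \<in> carrier_mat dB dB"
  shows "kron dA dB X Y * kron dA dB Z W = kron dA dB (X * Z) (Y * W)"
proof (rule eq_matI)
  fix i j assume "i < dim_row (kron dA dB (X * Z) (Y * W))" "j < dim_col (kron dA dB (X * Z) (Y * W))"
  then have ij: "i < dA * dB" "j < dA * dB" by (auto simp: kron_def)
  then have dB: "0 < dB" by (cases dB) auto
  have ia: "i div dB < dA" "j div dB < dA" using ij by (auto simp: div_less_iff_less_mult dB)
  have ib: "i mod dB < dB" "j mod dB < dB" using dB by auto
  have "(kron dA dB X Y * kron dA dB Z W) $$ (i, j) =
      (\<Sum>k<dA * dB. kron dA dB X Y $$ (i, k) * kron dA dB Z W $$ (k, j))"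
    using ij by (simp add: mult_entry[OF kron_carrier kron_carrier] del: index_mult_mat(1))
  also have "\<dots> = (\<Sum>a<dA. \<Sum>b<dB. kron dA dB X Y $$ (i, a * dB + b) * kron dA dB Z W $$ (a * dB + b, j))"
    by (rule sum_split)
  also have "\<dots> = (\<Sum>a<dA. \<Sum>b<dB. (X $$ (i div dB, a) * Z $$ (a, j div dB)) * (Y $$ (i mod dB, b) * W $$ (b, j mod dB)))"
    using ij by (intro sum.cong refl) (simp add: kron_index ab_lt mult_ac)
  also have "\<dots> = (\<Sum>a<dA. X $$ (i div dB, a) * Z $$ (a, j div dB)) * (\<Sum>b<dB. Y $$ (i mod dB, b) * W $$ (b, j mod dB))"
    by (simp add: sum_product)
  also have "\<dots> = kron dA dB (X * Z) (Y * W) $$ (i, j)"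
    using ij ia ib X Y Z W by (simp add: kron_index mult_entry[OF X Z] mult_entry[OF Y W] del: index_mult_mat(1))
  finally show "(kron dA dB X Y * kron dA dB Z W) $$ (i, j) = kron dA dB (X * Z) (Y * W) $$ (i, j)" .
qed (auto simp: kron_def)

lemma kron_adj: "X \<in> carrier_mat dA dA \<Longrightarrow> Y \<in> carrier_mat dB dB \<Longrightarrow>
  adj (kron dA dB X Y) = kron dA dB (adj X) (adj Y)"
proof (rule eq_matI)
  assume X: "X \<in> carrier_mat dA dA" and Y: "Y \<in> carrier_mat dB dB"
  fix i j assume "i < dim_row (kron dA dB (adj X) (adj Y))" "j < dim_col (kron dA dB (adj X) (adj Y))"
  then have ij: "i < dA * dB" "j < dA * dB" by (auto simp: kron_def)
  then have dB: "0 < dB" by (cases dB) auto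
  have ia: "i div dB < dA" "j div dB < dA" using ij by (auto simp: div_less_iff_less_mult dB)
  have ib: "i mod dB < dB" "j mod dB < dB" using dB by auto
  show "adj (kron dA dB X Y) $$ (i, j) = kron dA dB (adj X) (adj Y) $$ (i, j)"
    using ij ia ib X Y by (simp add: kron_index)
qed (auto simp: kron_def)

lemma kron_one: "kron dA dB (1\<^sub>m dA) (1\<^sub>m dB) = 1\<^sub>m (dA * dB)"
proof (rule eq_matI)
  fix i j assume "i < dim_row (1\<^sub>m (dA * dB))" "j < dim_col (1\<^sub>m (dA * dB))"
  then have ij: "i < dA * dB" "j < dA * dB" by auto
  then have dB: "0 < dB" by (cases dB) auto
  have ia: "i div dB < dA" "j div dB < dA" using ij by (auto simp: div_less_iff_less_mult dB)
  have ib: "i mod dB < dB" "j mod dB < dB" using dB by auto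
  have "(i div dB = j div dB \<and> i mod dB = j mod dB) = (i = j)"
    by (metis div_mult_mod_eq)
  then show "kron dA dB (1\<^sub>m dA) (1\<^sub>m dB) $$ (i, j) = 1\<^sub>m (dA * dB) $$ (i, j)"
    using ij ia ib by (auto simp: kron_index)
qed (auto simp: kron_def)

lemma kron_minus2: "X \<in> carrier_mat dA dA \<Longrightarrow> Y \<in> carrier_mat dB dB \<Longrightarrow> Z \<in> carrier_mat dB dB \<Longrightarrow>
  kron dA dB X (Y - Z) = kron dA dB X Y - kron dA dB X Z"
proof (rule eq_matI)
  assume X: "X \<in> carrier_mat dA dA" and Y: "Y \<in> carrier_mat dB dB" and Z: "Z \<in> carrier_mat dB dB"
  fix i j assume "i < dim_row (kron dA dB X Y - kron dA dB X Z)" "j < dim_col (kron dA dB X Y - kron dA dB X Z)"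
  then have ij: "i < dA * dB" "j < dA * dB" by (auto simp: kron_def)
  then have dB: "0 < dB" by (cases dB) auto
  have ib: "i mod dB < dB" "j mod dB < dB" using dB by auto
  show "kron dA dB X (Y - Z) $$ (i, j) = (kron dA dB X Y - kron dA dB X Z) $$ (i, j)"
    using ij ib Y Z by (simp add: kron_index algebra_simps)
qed (auto simp: kron_def)

lemma kron_minus1: "X \<in> carrier_mat dA dA \<Longrightarrow> Z \<in> carrier_mat dA dA \<Longrightarrow> Y \<in> carrier_mat dB dB \<Longrightarrow>
  kron dA dB (X - Z) Y = kron dA dB X Y - kron dA dB Z Y"
proof (rule eq_matI)
  assume X: "X \<in> carrier_mat dA dA" and Z: "Z \<in> carrier_mat dA dA" and Y: "Y \<in> carrier_mat dB dB"
  fix i j assume "i < dim_row (kron dA dB X Y - kron dA dB Z Y)" "j < dim_col (kron dA dB X Y - kron dA dB Z Y)"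
  then have ij: "i < dA * dB" "j < dA * dB" by (auto simp: kron_def)
  then have dB: "0 < dB" by (cases dB) auto
  have ia: "i div dB < dA" "j div dB < dA" using ij by (auto simp: div_less_iff_less_mult dB)
  show "kron dA dB (X - Z) Y $$ (i, j) = (kron dA dB X Y - kron dA dB Z Y) $$ (i, j)"
    using ij ia X Z by (simp add: kron_index algebra_simps)
qed (auto simp: kron_def)

lemma kron_smult2: "kron dA dB X (c \<cdot>\<^sub>m Y) = c \<cdot>\<^sub>m kron dA dB X Y" if "Y \<in> carrier_mat dB dB"
proof (rule eq_matI)
  fix i j assume "i < dim_row (c \<cdot>\<^sub>m kron dA dB X Y)" "j < dim_col (c \<cdot>\<^sub>m kron dA dB X Y)"
  then have ij: "i < dA * dB" "j < dA * dB" by (auto simp: kron_def)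
  then have dB: "0 < dB" by (cases dB) auto
  have ib: "i mod dB < dB" "j mod dB < dB" using dB by auto
  show "kron dA dB X (c \<cdot>\<^sub>m Y) $$ (i, j) = (c \<cdot>\<^sub>m kron dA dB X Y) $$ (i, j)"
    using ij ib that by (simp add: kron_index)
qed (auto simp: kron_def)

lemma kron_smult1: "kron dA dB (c \<cdot>\<^sub>m X) Y = c \<cdot>\<^sub>m kron dA dB X Y" if "X \<in> carrier_mat dA dA"
proof (rule eq_matI)
  fix i j assume "i < dim_row (c \<cdot>\<^sub>m kron dA dB X Y)" "j < dim_col (c \<cdot>\<^sub>m kron dA dB X Y)"
  then have ij: "i < dA * dB" "j < dA * dB" by (auto simp: kron_def)
  then have dB: "0 < dB" by (cases dB) auto
  have ia: "i div dB < dA" "j div dB < dA" using ij by (auto simp: div_less_iff_less_mult dB)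
  show "kron dA dB (c \<cdot>\<^sub>m X) Y $$ (i, j) = (c \<cdot>\<^sub>m kron dA dB X Y) $$ (i, j)"
    using ij ia that by (simp add: kron_index)
qed (auto simp: kron_def)

lemma kron_psd:
  assumes pX: "psd dA X" and pY: "psd dB Y"
  shows "psd (dA * dB) (kron dA dB X Y)"
proof -
  obtain U where cU: "U \<in> carrier_mat dA dA" and XU: "X = U * adj U" using psd_decomp[OF pX] by blast
  obtain V where cV: "V \<in> carrier_mat dB dB" and YV: "Y = V * adj V" using psd_decomp[OF pY] by blast
  have "kron dA dB X Y = kron dA dB U V * 1\<^sub>m (dA * dB) * adj (kron dA dB U V)"
    unfolding XU YV using cU cV by (simp add: kron_adj kron_mult[OF cU adj_carrier[OF cU] cV adj_carrier[OF cV]])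
  then show ?thesis using psd_congr[OF psd_one kron_carrier] by simp
qed



lemma sq_sum_le_real:
  fixes t :: "nat \<Rightarrow> real"
  shows "(\<Sum>b<d. t b)\<^sup>2 \<le> real d * (\<Sum>b<d. (t b)\<^sup>2)"
proof -
  have "0 \<le> (\<Sum>i<d. \<Sum>j<d. (t i - t j)\<^sup>2)" by (intro sum_nonneg) auto
  also have "\<dots> = (\<Sum>i<d. \<Sum>j<d. (t i)\<^sup>2 + (t j)\<^sup>2 - 2 * (t i * t j))"
    by (intro sum.cong refl) (simp add: power2_diff)
  also have "\<dots> = (\<Sum>i<d. real d * (t i)\<^sup>2 + (\<Sum>b<d. (t b)\<^sup>2) - 2 * t i * (\<Sum>b<d. t b))"
    by (intro sum.cong refl) (simp add: sum.distrib sum_subtractf sum_distrib_left mult.assoc)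
  also have "\<dots> = real d * (\<Sum>b<d. (t b)\<^sup>2) + real d * (\<Sum>b<d. (t b)\<^sup>2) - 2 * (\<Sum>b<d. t b) * (\<Sum>b<d. t b)"
    by (simp add: sum.distrib sum_subtractf sum_distrib_left[symmetric] sum_distrib_right[symmetric])
  also have "\<dots> = 2 * (real d * (\<Sum>b<d. (t b)\<^sup>2)) - 2 * (\<Sum>b<d. t b)\<^sup>2"
    by (simp add: power2_eq_square)
  finally show ?thesis by simp
qed

lemma sq_sum_le_complex:
  fixes c :: "nat \<Rightarrow> complex"
  shows "(cmod (\<Sum>b<d. c b))\<^sup>2 \<le> real d * (\<Sum>b<d. (cmod (c b))\<^sup>2)"
proof -
  have "cmod (\<Sum>b<d. c b) \<le> (\<Sum>b<d. cmod (c b))" by (rule norm_sum)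
  then have "(cmod (\<Sum>b<d. c b))\<^sup>2 \<le> (\<Sum>b<d. cmod (c b))\<^sup>2"
    by (intro power_mono) auto
  also have "\<dots> \<le> real d * (\<Sum>b<d. (cmod (c b))\<^sup>2)" by (rule sq_sum_le_real)
  finally show ?thesis .
qed

lemma sq_cong: "M \<in> carrier_mat n n \<Longrightarrow> (\<forall>i<n. x i = x' i) \<Longrightarrow> (\<forall>i<n. y i = y' i) \<Longrightarrow> sq M x y = sq M x' y'"
  by (simp add: sq_n)

lemma psd_sum_bound:
  assumes p: "psd n \<rho>" and v: "\<forall>i<n. v i = (\<Sum>b<d. u b i)"
  shows "Re (sq \<rho> v v) \<le> real d * (\<Sum>b<d. Re (sq \<rho> (u b) (u b)))"
proof -
  have c\<rho>: "\<rho> \<in> carrier_mat n n" using p by (rule psd_carrier)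
  obtain Y where cY: "Y \<in> carrier_mat n n" and rY: "\<rho> = Y * adj Y" using psd_decomp[OF p] by blast
  have rY': "\<rho> = Y * 1\<^sub>m n * adj Y" using rY cY by simp
  define z where "z w l = (\<Sum>i<n. cnj (Y $$ (i, l)) * w i)" for w l
  have qf: "Re (sq \<rho> w w) = (\<Sum>l<n. (cmod (z w l))\<^sup>2)" for w
  proof -
    have "sq \<rho> w w = sq (1\<^sub>m n) (z w) (z w)" unfolding rY' z_def by (rule sq_congr[OF cY one_carrier_mat])
    also have "\<dots> = (\<Sum>l<n. cnj (z w l) * z w l)" by (rule sq_one)
    finally show ?thesis by (simp only: Re_sum re_cnj_mult)
  qed
  have zv: "z v l = (\<Sum>b<d. z (u b) l)" for l
  proof -
    have "z v l = (\<Sum>i<n. \<Sum>b<d. cnj (Y $$ (i, l)) * u b i)"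
      unfolding z_def using v by (simp add: sum_distrib_left)
    also have "\<dots> = (\<Sum>b<d. \<Sum>i<n. cnj (Y $$ (i, l)) * u b i)" by (rule sum.swap)
    finally show ?thesis by (simp add: z_def)
  qed
  have "Re (sq \<rho> v v) = (\<Sum>l<n. (cmod (\<Sum>b<d. z (u b) l))\<^sup>2)" by (simp add: qf zv)
  also have "\<dots> \<le> (\<Sum>l<n. real d * (\<Sum>b<d. (cmod (z (u b) l))\<^sup>2))"
    by (intro sum_mono sq_sum_le_complex)
  also have "\<dots> = real d * (\<Sum>l<n. \<Sum>b<d. (cmod (z (u b) l))\<^sup>2)"
    by (simp add: sum_distrib_left)
  also have "\<dots> = real d * (\<Sum>b<d. \<Sum>l<n. (cmod (z (u b) l))\<^sup>2)"
    by (subst sum.swap) (rule refl)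
  also have "\<dots> = real d * (\<Sum>b<d. Re (sq \<rho> (u b) (u b)))" by (simp add: qf)
  finally show ?thesis .
qed



lemma sum_split2:
  fixes dA dB :: nat
  shows "(\<Sum>i<dA * dB. \<Sum>j<dA * dB. g i j) =
    (\<Sum>a<dA. \<Sum>b<dB. \<Sum>a'<dA. \<Sum>b'<dB. g (a * dB + b) (a' * dB + b'))"
  by (simp add: sum_split)

lemma sq_kron_I2:
  assumes cS: "S \<in> carrier_mat dA dA"
  shows "sq (kron dA dB S (1\<^sub>m dB)) x x = (\<Sum>b<dB. sq S (\<lambda>a. x (a * dB + b)) (\<lambda>a. x (a * dB + b)))"
proof -
  have "sq (kron dA dB S (1\<^sub>m dB)) x x = (\<Sum>a<dA. \<Sum>b<dB. \<Sum>a'<dA. \<Sum>b'<dB.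
      cnj (x (a * dB + b)) * kron dA dB S (1\<^sub>m dB) $$ (a * dB + b, a' * dB + b') * x (a' * dB + b'))"
    unfolding sq_n[OF kron_carrier] by (rule sum_split2)
  also have "\<dots> = (\<Sum>a<dA. \<Sum>b<dB. \<Sum>a'<dA. \<Sum>b'<dB. if b' = b then cnj (x (a * dB + b)) * S $$ (a, a') * x (a' * dB + b) else 0)"
    by (intro sum.cong refl) (auto simp: kron_index')
  also have "\<dots> = (\<Sum>a<dA. \<Sum>b<dB. \<Sum>a'<dA. cnj (x (a * dB + b)) * S $$ (a, a') * x (a' * dB + b))"
    by simp
  also have "\<dots> = (\<Sum>b<dB. \<Sum>a<dA. \<Sum>a'<dA. cnj (x (a * dB + b)) * S $$ (a, a') * x (a' * dB + b))"
    by (rule sum.swap)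
  also have "\<dots> = (\<Sum>b<dB. sq S (\<lambda>a. x (a * dB + b)) (\<lambda>a. x (a * dB + b)))"
    unfolding sq_n[OF cS] by simp
  finally show ?thesis .
qed

lemma sq_kron_I1:
  assumes cS: "S \<in> carrier_mat dB dB"
  shows "sq (kron dA dB (1\<^sub>m dA) S) x x = (\<Sum>a<dA. sq S (\<lambda>b. x (a * dB + b)) (\<lambda>b. x (a * dB + b)))"
proof -
  have "sq (kron dA dB (1\<^sub>m dA) S) x x = (\<Sum>a<dA. \<Sum>b<dB. \<Sum>a'<dA. \<Sum>b'<dB.
      cnj (x (a * dB + b)) * kron dA dB (1\<^sub>m dA) S $$ (a * dB + b, a' * dB + b') * x (a' * dB + b'))"
    unfolding sq_n[OF kron_carrier] by (rule sum_split2)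
  also have "\<dots> = (\<Sum>a<dA. \<Sum>b<dB. \<Sum>a'<dA. if a' = a then (\<Sum>b'<dB. cnj (x (a * dB + b)) * S $$ (b, b') * x (a * dB + b')) else 0)"
    by (intro sum.cong refl) (auto simp: kron_index')
  also have "\<dots> = (\<Sum>a<dA. \<Sum>b<dB. \<Sum>b'<dB. cnj (x (a * dB + b)) * S $$ (b, b') * x (a * dB + b'))"
    by simp
  also have "\<dots> = (\<Sum>a<dA. sq S (\<lambda>b. x (a * dB + b)) (\<lambda>b. x (a * dB + b)))"
    unfolding sq_n[OF cS] by simp
  finally show ?thesis .
qed


lemma margA_carrier[simp]: "marg_A dA dB R \<in> carrier_mat dA dA"
  by (simp add: marg_A_def)
lemma margB_carrier[simp]: "marg_B dA dB R \<in> carrier_mat dB dB"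
  by (simp add: marg_B_def)
lemma marg_dims[simp]: "dim_row (marg_A dA dB R) = dA" "dim_col (marg_A dA dB R) = dA"
  "dim_row (marg_B dA dB R) = dB" "dim_col (marg_B dA dB R) = dB"
  by (simp_all add: marg_A_def marg_B_def)
lemma margA_index: "a < dA \<Longrightarrow> a' < dA \<Longrightarrow> marg_A dA dB R $$ (a, a') = (\<Sum>b<dB. R $$ (a * dB + b, a' * dB + b))"
  by (simp add: marg_A_def)
lemma margB_index: "b < dB \<Longrightarrow> b' < dB \<Longrightarrow> marg_B dA dB R $$ (b, b') = (\<Sum>a<dA. R $$ (a * dB + b, a * dB + b'))"
  by (simp add: marg_B_def)

lemma sum_if_const: "(\<Sum>x\<in>A. if P then f x else 0) = (if P then (\<Sum>x\<in>A. f x) else (0::complex))"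
  by (cases P) simp_all

lemma sq_margA:
  assumes c\<rho>: "\<rho> \<in> carrier_mat (dA * dB) (dA * dB)"
  shows "sq (marg_A dA dB \<rho>) v v = (\<Sum>b<dB. sq \<rho> (\<lambda>i. if i mod dB = b then v (i div dB) else 0) (\<lambda>i. if i mod dB = b then v (i div dB) else 0))"
proof -
  let ?T = "\<lambda>a b a'. cnj (v a) * \<rho> $$ (a * dB + b, a' * dB + b) * v a'"
  have "sq (marg_A dA dB \<rho>) v v = (\<Sum>a<dA. \<Sum>a'<dA. \<Sum>b<dB. ?T a b a')"
    unfolding sq_n[OF margA_carrier] by (intro sum.cong refl) (simp add: margA_index sum_distrib_left sum_distrib_right)
  also have "\<dots> = (\<Sum>a<dA. \<Sum>b<dB. \<Sum>a'<dA. ?T a b a')"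
  proof -
    have e: "(\<Sum>a'<dA. \<Sum>b<dB. ?T a b a') = (\<Sum>b<dB. \<Sum>a'<dA. ?T a b a')" for a by (rule sum.swap)
    show ?thesis by (simp only: e)
  qed
  also have "\<dots> = (\<Sum>b<dB. \<Sum>a<dA. \<Sum>a'<dA. ?T a b a')" by (rule sum.swap)
  also have "\<dots> = (\<Sum>b<dB. sq \<rho> (\<lambda>i. if i mod dB = b then v (i div dB) else 0) (\<lambda>i. if i mod dB = b then v (i div dB) else 0))"
  proof (rule sum.cong[OF refl])
    fix b assume b: "b \<in> {..<dB}"
    let ?t = "\<lambda>i. if i mod dB = b then v (i div dB) else 0"
    have "sq \<rho> ?t ?t = (\<Sum>a<dA. \<Sum>b1<dB. \<Sum>a'<dA. \<Sum>b2<dB.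
        cnj (?t (a * dB + b1)) * \<rho> $$ (a * dB + b1, a' * dB + b2) * ?t (a' * dB + b2))"
      unfolding sq_n[OF c\<rho>] by (rule sum_split2)
    also have "\<dots> = (\<Sum>a<dA. \<Sum>b1<dB. \<Sum>a'<dA. \<Sum>b2<dB. if b1 = b then (if b2 = b then ?T a b a' else 0) else 0)"
      by (intro sum.cong refl) (simp add: ab_div ab_mod)
    also have "\<dots> = (\<Sum>a<dA. \<Sum>a'<dA. ?T a b a')" using b by (simp add: sum_if_const)
    finally show "(\<Sum>a<dA. \<Sum>a'<dA. ?T a b a') = sq \<rho> ?t ?t" by simp
  qed
  finally show ?thesis .
qed

lemma sq_margB:
  assumes c\<rho>: "\<rho> \<in> carrier_mat (dA * dB) (dA * dB)"
  shows "sq (marg_B dA dB \<rho>) v v = (\<Sum>a<dA. sq \<rho> (\<lambda>i. if i div dB = a then v (i mod dB) else 0) (\<lambda>i. if i div dB = a then v (i mod dB) else 0))"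
proof -
  let ?T = "\<lambda>a b b'. cnj (v b) * \<rho> $$ (a * dB + b, a * dB + b') * v b'"
  have "sq (marg_B dA dB \<rho>) v v = (\<Sum>b<dB. \<Sum>b'<dB. \<Sum>a<dA. ?T a b b')"
    unfolding sq_n[OF margB_carrier] by (intro sum.cong refl) (simp add: margB_index sum_distrib_left sum_distrib_right)
  also have "\<dots> = (\<Sum>b<dB. \<Sum>a<dA. \<Sum>b'<dB. ?T a b b')"
  proof -
    have e: "(\<Sum>b'<dB. \<Sum>a<dA. ?T a b b') = (\<Sum>a<dA. \<Sum>b'<dB. ?T a b b')" for b by (rule sum.swap)
    show ?thesis by (simp only: e)
  qed
  also have "\<dots> = (\<Sum>a<dA. \<Sum>b<dB. \<Sum>b'<dB. ?T a b b')" by (rule sum.swap)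
  also have "\<dots> = (\<Sum>a<dA. sq \<rho> (\<lambda>i. if i div dB = a then v (i mod dB) else 0) (\<lambda>i. if i div dB = a then v (i mod dB) else 0))"
  proof (rule sum.cong[OF refl])
    fix a assume a: "a \<in> {..<dA}"
    let ?t = "\<lambda>i. if i div dB = a then v (i mod dB) else 0"
    have "sq \<rho> ?t ?t = (\<Sum>a1<dA. \<Sum>b1<dB. \<Sum>a2<dA. \<Sum>b2<dB.
        cnj (?t (a1 * dB + b1)) * \<rho> $$ (a1 * dB + b1, a2 * dB + b2) * ?t (a2 * dB + b2))"
      unfolding sq_n[OF c\<rho>] by (rule sum_split2)
    also have "\<dots> = (\<Sum>a1<dA. \<Sum>b1<dB. \<Sum>a2<dA. \<Sum>b2<dB. if a1 = a then (if a2 = a then ?T a b1 b2 else 0) else 0)"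
      by (intro sum.cong refl) (simp add: ab_div ab_mod)
    also have "\<dots> = (\<Sum>a1<dA. if a1 = a then (\<Sum>b1<dB. \<Sum>a2<dA. if a2 = a then (\<Sum>b2<dB. ?T a b1 b2) else 0) else 0)"
      by (simp add: sum_if_const)
    also have "\<dots> = (\<Sum>b<dB. \<Sum>b'<dB. ?T a b b')" using a by simp
    finally show "(\<Sum>b<dB. \<Sum>b'<dB. ?T a b b') = sq \<rho> ?t ?t" by simp
  qed
  finally show ?thesis .
qed



lemma trace_kron_I1:
  assumes c\<rho>: "\<rho> \<in> carrier_mat (dA * dB) (dA * dB)" and cX: "X \<in> carrier_mat dB dB"
  shows "mat_trace (\<rho> * kron dA dB (1\<^sub>m dA) X) = mat_trace (marg_B dA dB \<rho> * X)"
proof -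
  let ?T = "\<lambda>a b b'. \<rho> $$ (a * dB + b, a * dB + b') * X $$ (b', b)"
  have "mat_trace (\<rho> * kron dA dB (1\<^sub>m dA) X) = (\<Sum>i<dA * dB. \<Sum>k<dA * dB. \<rho> $$ (i, k) * kron dA dB (1\<^sub>m dA) X $$ (k, i))"
    unfolding mat_trace_def using c\<rho> by (intro sum.cong refl) (simp_all add: mult_entry[OF c\<rho> kron_carrier] del: index_mult_mat(1))
  also have "\<dots> = (\<Sum>a<dA. \<Sum>b<dB. \<Sum>a'<dA. \<Sum>b'<dB. \<rho> $$ (a * dB + b, a' * dB + b') * kron dA dB (1\<^sub>m dA) X $$ (a' * dB + b', a * dB + b))"
    by (rule sum_split2)
  also have "\<dots> = (\<Sum>a<dA. \<Sum>b<dB. \<Sum>a'<dA. \<Sum>b'<dB. if a' = a then ?T a b b' else 0)"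
    by (intro sum.cong refl) (simp add: kron_index')
  also have "\<dots> = (\<Sum>a<dA. \<Sum>b<dB. \<Sum>b'<dB. ?T a b b')" by (simp add: sum_if_const)
  also have "\<dots> = (\<Sum>b<dB. \<Sum>a<dA. \<Sum>b'<dB. ?T a b b')" by (rule sum.swap)
  also have "\<dots> = (\<Sum>b<dB. \<Sum>b'<dB. \<Sum>a<dA. ?T a b b')"
  proof -
    have e: "(\<Sum>a<dA. \<Sum>b'<dB. ?T a b b') = (\<Sum>b'<dB. \<Sum>a<dA. ?T a b b')" for b by (rule sum.swap)
    show ?thesis by (simp only: e)
  qed
  also have "\<dots> = mat_trace (marg_B dA dB \<rho> * X)"
    unfolding mat_trace_def using cX
    by (intro sum.cong refl) (simp_all add: mult_entry[OF margB_carrier cX] margB_index sum_distrib_right del: index_mult_mat(1))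
  finally show ?thesis .
qed

lemma trace_kron_I2:
  assumes c\<rho>: "\<rho> \<in> carrier_mat (dA * dB) (dA * dB)" and cX: "X \<in> carrier_mat dA dA"
  shows "mat_trace (\<rho> * kron dA dB X (1\<^sub>m dB)) = mat_trace (marg_A dA dB \<rho> * X)"
proof -
  let ?T = "\<lambda>a b a'. \<rho> $$ (a * dB + b, a' * dB + b) * X $$ (a', a)"
  have "mat_trace (\<rho> * kron dA dB X (1\<^sub>m dB)) = (\<Sum>i<dA * dB. \<Sum>k<dA * dB. \<rho> $$ (i, k) * kron dA dB X (1\<^sub>m dB) $$ (k, i))"
    unfolding mat_trace_def using c\<rho> by (intro sum.cong refl) (simp_all add: mult_entry[OF c\<rho> kron_carrier] del: index_mult_mat(1))
  also have "\<dots> = (\<Sum>a<dA. \<Sum>b<dB. \<Sum>a'<dA. \<Sum>b'<dB. \<rho> $$ (a * dB + b, a' * dB + b') * kron dA dB X (1\<^sub>m dB) $$ (a' * dB + b', a * dB + b))"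
    by (rule sum_split2)
  also have "\<dots> = (\<Sum>a<dA. \<Sum>b<dB. \<Sum>a'<dA. \<Sum>b'<dB. if b' = b then ?T a b a' else 0)"
    by (intro sum.cong refl) (auto simp: kron_index')
  also have "\<dots> = (\<Sum>a<dA. \<Sum>b<dB. \<Sum>a'<dA. ?T a b a')" by simp
  also have "\<dots> = (\<Sum>a<dA. \<Sum>a'<dA. \<Sum>b<dB. ?T a b a')"
  proof -
    have e: "(\<Sum>b<dB. \<Sum>a'<dA. ?T a b a') = (\<Sum>a'<dA. \<Sum>b<dB. ?T a b a')" for a by (rule sum.swap)
    show ?thesis by (simp only: e)
  qed
  also have "\<dots> = mat_trace (marg_A dA dB \<rho> * X)"
    unfolding mat_trace_def using cX
    by (intro sum.cong refl) (simp_all add: mult_entry[OF margA_carrier cX] margA_index sum_distrib_right del: index_mult_mat(1))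
  finally show ?thesis .
qed



lemma psd_margA:
  assumes p: "psd (dA * dB) \<rho>"
  shows "psd dA (marg_A dA dB \<rho>)"
proof -
  have c\<rho>: "\<rho> \<in> carrier_mat (dA * dB) (dA * dB)" using p by (rule psd_carrier)
  have h: "adj (marg_A dA dB \<rho>) = marg_A dA dB \<rho>"
  proof (rule eq_matI)
    fix a a' assume "a < dim_row (marg_A dA dB \<rho>)" "a' < dim_col (marg_A dA dB \<rho>)"
    then have aa: "a < dA" "a' < dA" by auto
    have "adj (marg_A dA dB \<rho>) $$ (a, a') = (\<Sum>b<dB. cnj (\<rho> $$ (a' * dB + b, a * dB + b)))"
      using aa by (simp add: margA_index)
    also have "\<dots> = (\<Sum>b<dB. \<rho> $$ (a * dB + b, a' * dB + b))"
    proof (intro sum.cong refl)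
      fix b assume "b \<in> {..<dB}"
      then have b: "b < dB" by simp
      show "cnj (\<rho> $$ (a' * dB + b, a * dB + b)) = \<rho> $$ (a * dB + b, a' * dB + b)"
        using psd_herm_entry[OF p ab_lt[OF aa(1) b] ab_lt[OF aa(2) b]] by simp
    qed
    finally show "adj (marg_A dA dB \<rho>) $$ (a, a') = marg_A dA dB \<rho> $$ (a, a')"
      using aa by (simp add: margA_index)
  qed simp_all
  have "0 \<le> Re (sq (marg_A dA dB \<rho>) v v)" for v
    unfolding sq_margA[OF c\<rho>] Re_sum by (intro sum_nonneg) (simp add: psd_sq[OF p])
  then show ?thesis unfolding psd_def using h by simp
qed

lemma psd_margB:
  assumes p: "psd (dA * dB) \<rho>"
  shows "psd dB (marg_B dA dB \<rho>)"
proof -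
  have c\<rho>: "\<rho> \<in> carrier_mat (dA * dB) (dA * dB)" using p by (rule psd_carrier)
  have h: "adj (marg_B dA dB \<rho>) = marg_B dA dB \<rho>"
  proof (rule eq_matI)
    fix b b' assume "b < dim_row (marg_B dA dB \<rho>)" "b' < dim_col (marg_B dA dB \<rho>)"
    then have bb: "b < dB" "b' < dB" by auto
    have "adj (marg_B dA dB \<rho>) $$ (b, b') = (\<Sum>a<dA. cnj (\<rho> $$ (a * dB + b', a * dB + b)))"
      using bb by (simp add: margB_index)
    also have "\<dots> = (\<Sum>a<dA. \<rho> $$ (a * dB + b, a * dB + b'))"
    proof (intro sum.cong refl)
      fix a assume "a \<in> {..<dA}"
      then have a: "a < dA" by simp
      show "cnj (\<rho> $$ (a * dB + b', a * dB + b)) = \<rho> $$ (a * dB + b, a * dB + b')"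
        using psd_herm_entry[OF p ab_lt[OF a bb(1)] ab_lt[OF a bb(2)]] by simp
    qed
    finally show "adj (marg_B dA dB \<rho>) $$ (b, b') = marg_B dA dB \<rho> $$ (b, b')"
      using bb by (simp add: margB_index)
  qed simp_all
  have "0 \<le> Re (sq (marg_B dA dB \<rho>) v v)" for v
    unfolding sq_margB[OF c\<rho>] Re_sum by (intro sum_nonneg) (simp add: psd_sq[OF p])
  then show ?thesis unfolding psd_def using h by simp
qed

lemma trace_margA: "mat_trace (marg_A dA dB \<rho>) = mat_trace \<rho>" if "\<rho> \<in> carrier_mat (dA * dB) (dA * dB)"
proof -
  have "mat_trace (marg_A dA dB \<rho>) = (\<Sum>a<dA. \<Sum>b<dB. \<rho> $$ (a * dB + b, a * dB + b))"
    unfolding mat_trace_def by (simp add: margA_index)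
  also have "\<dots> = mat_trace \<rho>" unfolding mat_trace_def using that by (simp add: sum_split)
  finally show ?thesis .
qed

lemma trace_margB: "mat_trace (marg_B dA dB \<rho>) = mat_trace \<rho>" if "\<rho> \<in> carrier_mat (dA * dB) (dA * dB)"
proof -
  have "mat_trace (marg_B dA dB \<rho>) = (\<Sum>b<dB. \<Sum>a<dA. \<rho> $$ (a * dB + b, a * dB + b))"
    unfolding mat_trace_def by (simp add: margB_index)
  also have "\<dots> = (\<Sum>a<dA. \<Sum>b<dB. \<rho> $$ (a * dB + b, a * dB + b))" by (rule sum.swap)
  also have "\<dots> = mat_trace \<rho>" unfolding mat_trace_def using that by (simp add: sum_split)
  finally show ?thesis .
qed

lemma dom_B:
  assumes p: "psd (dA * dB) \<rho>" and dB: "0 < dB"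
  shows "psd (dA * dB) (complex_of_real (real dB) \<cdot>\<^sub>m kron dA dB (marg_A dA dB \<rho>) (1\<^sub>m dB) - \<rho>)"
proof -
  let ?n = "dA * dB"
  let ?K = "kron dA dB (marg_A dA dB \<rho>) (1\<^sub>m dB)"
  have c\<rho>: "\<rho> \<in> carrier_mat ?n ?n" using p by (rule psd_carrier)
  have pA: "psd dA (marg_A dA dB \<rho>)" by (rule psd_margA[OF p])
  have hK: "adj ?K = ?K" using kron_adj[OF margA_carrier one_carrier_mat] psd_adj[OF pA] by simp
  have cK: "?K \<in> carrier_mat ?n ?n" by simp
  have cM: "complex_of_real (real dB) \<cdot>\<^sub>m ?K \<in> carrier_mat ?n ?n" by simp
  have h: "adj (complex_of_real (real dB) \<cdot>\<^sub>m ?K - \<rho>) = complex_of_real (real dB) \<cdot>\<^sub>m ?K - \<rho>"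
    using adj_minus[OF cM c\<rho>] hK psd_adj[OF p] by (simp add: adj_smult)
  have "Re (sq \<rho> x x) \<le> real dB * Re (sq ?K x x)" for x
  proof -
    define t where "t b b' = (\<lambda>i. if i mod dB = b' then x ((i div dB) * dB + b) else 0)" for b b'
    have K: "Re (sq ?K x x) = (\<Sum>b<dB. \<Sum>b'<dB. Re (sq \<rho> (t b b') (t b b')))"
      unfolding sq_kron_I2[OF margA_carrier] sq_margA[OF c\<rho>] t_def Re_sum by simp
    have xs: "\<forall>i<?n. x i = (\<Sum>b<dB. t b b i)"
    proof (intro allI impI)
      fix i assume "i < ?n"
      have "(\<Sum>b<dB. t b b i) = x ((i div dB) * dB + i mod dB)"
        unfolding t_def using dB by (simp add: sum.delta' cong: if_cong)
      then show "x i = (\<Sum>b<dB. t b b i)" by simp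
    qed
    have b1: "Re (sq \<rho> x x) \<le> real dB * (\<Sum>b<dB. Re (sq \<rho> (t b b) (t b b)))"
      by (rule psd_sum_bound[OF p xs])
    have s: "(\<Sum>b<dB. Re (sq \<rho> (t b b) (t b b))) \<le> (\<Sum>b<dB. \<Sum>b'<dB. Re (sq \<rho> (t b b') (t b b')))"
      by (intro sum_mono member_le_sum) (auto intro: psd_sq[OF p])
    have "real dB * (\<Sum>b<dB. Re (sq \<rho> (t b b) (t b b))) \<le> real dB * (\<Sum>b<dB. \<Sum>b'<dB. Re (sq \<rho> (t b b') (t b b')))"
      using s by (rule mult_left_mono) simp
    then show ?thesis unfolding K using b1 by linarith
  qed
  then have "0 \<le> Re (sq (complex_of_real (real dB) \<cdot>\<^sub>m ?K - \<rho>) x x)" for x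
    using sq_minus[OF cM c\<rho>] sq_smult[OF cK] by simp
  then show ?thesis unfolding psd_def using h cM c\<rho> by (simp add: minus_carrier_mat)
qed

lemma dom_A:
  assumes p: "psd (dA * dB) \<rho>"
  shows "psd (dA * dB) (complex_of_real (real dA) \<cdot>\<^sub>m kron dA dB (1\<^sub>m dA) (marg_B dA dB \<rho>) - \<rho>)"
proof -
  let ?n = "dA * dB"
  let ?K = "kron dA dB (1\<^sub>m dA) (marg_B dA dB \<rho>)"
  have c\<rho>: "\<rho> \<in> carrier_mat ?n ?n" using p by (rule psd_carrier)
  have pB: "psd dB (marg_B dA dB \<rho>)" by (rule psd_margB[OF p])
  have hK: "adj ?K = ?K" using kron_adj[OF one_carrier_mat margB_carrier] psd_adj[OF pB] by simp
  have cK: "?K \<in> carrier_mat ?n ?n" by simp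
  have cM: "complex_of_real (real dA) \<cdot>\<^sub>m ?K \<in> carrier_mat ?n ?n" by simp
  have h: "adj (complex_of_real (real dA) \<cdot>\<^sub>m ?K - \<rho>) = complex_of_real (real dA) \<cdot>\<^sub>m ?K - \<rho>"
    using adj_minus[OF cM c\<rho>] hK psd_adj[OF p] by (simp add: adj_smult)
  have "Re (sq \<rho> x x) \<le> real dA * Re (sq ?K x x)" for x
  proof -
    define t where "t a a' = (\<lambda>i. if i div dB = a' then x (a * dB + i mod dB) else 0)" for a a'
    have K: "Re (sq ?K x x) = (\<Sum>a<dA. \<Sum>a'<dA. Re (sq \<rho> (t a a') (t a a')))"
      unfolding sq_kron_I1[OF margB_carrier] sq_margB[OF c\<rho>] t_def Re_sum by simp
    have xs: "\<forall>i<?n. x i = (\<Sum>a<dA. t a a i)"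
    proof (intro allI impI)
      fix i assume i: "i < ?n"
      then have dB: "0 < dB" by (cases dB) auto
      have ia: "i div dB < dA" using i by (simp add: div_less_iff_less_mult dB)
      have "(\<Sum>a<dA. t a a i) = x ((i div dB) * dB + i mod dB)"
        unfolding t_def using ia by (simp add: sum.delta' cong: if_cong)
      then show "x i = (\<Sum>a<dA. t a a i)" by simp
    qed
    have b1: "Re (sq \<rho> x x) \<le> real dA * (\<Sum>a<dA. Re (sq \<rho> (t a a) (t a a)))"
      by (rule psd_sum_bound[OF p xs])
    have s: "(\<Sum>a<dA. Re (sq \<rho> (t a a) (t a a))) \<le> (\<Sum>a<dA. \<Sum>a'<dA. Re (sq \<rho> (t a a') (t a a')))"
      by (intro sum_mono member_le_sum) (auto intro: psd_sq[OF p])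
    have "real dA * (\<Sum>a<dA. Re (sq \<rho> (t a a) (t a a))) \<le> real dA * (\<Sum>a<dA. \<Sum>a'<dA. Re (sq \<rho> (t a a') (t a a')))"
      using s by (rule mult_left_mono) simp
    then show ?thesis unfolding K using b1 by linarith
  qed
  then have "0 \<le> Re (sq (complex_of_real (real dA) \<cdot>\<^sub>m ?K - \<rho>) x x)" for x
    using sq_minus[OF cM c\<rho>] sq_smult[OF cK] by simp
  then show ?thesis unfolding psd_def using h cM c\<rho> by (simp add: minus_carrier_mat)
qed


lemma trace_cyc3:
  assumes "S \<in> carrier_mat n n" "\<rho> \<in> carrier_mat n n"
  shows "mat_trace (S * \<rho> * S) = mat_trace (\<rho> * (S * S))"
proof -
  have "mat_trace (S * \<rho> * S) = mat_trace (S * (S * \<rho>))"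
    using trace_comm[of "S * \<rho>" n n S] assms by simp
  also have "\<dots> = mat_trace ((S * S) * \<rho>)" using assoc_mult_mat[of S n n S n \<rho> n] assms by simp
  also have "\<dots> = mat_trace (\<rho> * (S * S))" using trace_comm[of "S * S" n n \<rho>] assms by simp
  finally show ?thesis .
qed

lemma scalar_final:
  fixes t d :: real
  assumes t0: "0 < t" and t1: "t \<le> 1" and d: "0 < d"
    and x: "\<delta> / d * (t - \<eta> - 2 * sqrt \<eta>) \<le> x" and de: "\<delta> = 4 * t\<^sup>2 / (9 * d)" and eta: "\<eta> = d * \<delta> / 4"
  shows "8 * t ^ 3 / (81 * d\<^sup>2) \<le> x"
proof -
  have e: "\<eta> = (t / 3)\<^sup>2" using eta de d by (simp add: power2_eq_square field_simps)
  have se: "sqrt \<eta> = t / 3" using e t0 by simp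
  have "t - \<eta> - 2 * sqrt \<eta> = t / 3 - t\<^sup>2 / 9" using e se by (simp add: power2_eq_square field_simps)
  also have "\<dots> \<ge> 2 * t / 9" using t0 t1 by (simp add: power2_eq_square field_simps mult_left_le)
  finally have "2 * t / 9 \<le> t - \<eta> - 2 * sqrt \<eta>" .
  then have "\<delta> / d * (2 * t / 9) \<le> \<delta> / d * (t - \<eta> - 2 * sqrt \<eta>)"
    using de d t0 by (intro mult_left_mono) auto
  moreover have "\<delta> / d * (2 * t / 9) = 8 * t ^ 3 / (81 * d\<^sup>2)"
    using de d by (simp add: power2_eq_square power3_eq_cube field_simps)
  ultimately show ?thesis using x by linarith
qed

lemma bound_B:
  assumes p\<rho>: "psd (dA * dB) \<rho>" and tr: "mat_trace \<rho> = 1"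
    and pP: "psd (dA * dB) P" and pIP: "psd (dA * dB) (1\<^sub>m (dA * dB) - P)"
    and t0: "0 < Re (mat_trace (P * \<rho>))" and dB: "0 < dB"
  shows "8 * (Re (mat_trace (P * \<rho>))) ^ 3 / (81 * (real dB)\<^sup>2) \<le>
    Re (mat_trace (P * kron dA dB (marg_A dA dB \<rho>) (marg_B dA dB \<rho>)))"
proof -
  let ?n = "dA * dB"
  define t where "t = Re (mat_trace (P * \<rho>))"
  define \<sigma>A where "\<sigma>A = marg_A dA dB \<rho>"
  define \<sigma>B where "\<sigma>B = marg_B dA dB \<rho>"
  have c\<rho>: "\<rho> \<in> carrier_mat ?n ?n" using p\<rho> by (rule psd_carrier)
  have cP: "P \<in> carrier_mat ?n ?n" using pP by (rule psd_carrier)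
  have pA: "psd dA \<sigma>A" unfolding \<sigma>A_def by (rule psd_margA[OF p\<rho>])
  have pB: "psd dB \<sigma>B" unfolding \<sigma>B_def by (rule psd_margB[OF p\<rho>])
  have cA: "\<sigma>A \<in> carrier_mat dA dA" and cB: "\<sigma>B \<in> carrier_mat dB dB" unfolding \<sigma>A_def \<sigma>B_def by auto
  have trB: "mat_trace \<sigma>B = 1" unfolding \<sigma>B_def using trace_margB[OF c\<rho>] tr by simp
  have t1: "t \<le> 1" unfolding t_def using trace_le_P[OF p\<rho> pIP cP] tr by simp
  have tpos: "0 < t" unfolding t_def by (rule t0)
  define \<delta> where "\<delta> = 4 * t\<^sup>2 / (9 * real dB)"
  have d0: "0 < \<delta>" unfolding \<delta>_def using tpos dB by simp
  obtain Q where cQ: "Q \<in> carrier_mat dB dB" and hQ: "adj Q = Q"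
    and Q1: "psd dB (\<sigma>B - complex_of_real \<delta> \<cdot>\<^sub>m (Q * Q))"
    and Q2: "Re (mat_trace (\<sigma>B * (Q * Q))) \<le> Re (mat_trace \<sigma>B)"
    and Q3: "Re (mat_trace (\<sigma>B * ((1\<^sub>m dB - Q) * (1\<^sub>m dB - Q)))) \<le> real dB * \<delta> / 4"
    using Qconstr[OF pB d0] by blast
  define R where "R = kron dA dB (1\<^sub>m dA) Q"
  define G where "G = kron dA dB \<sigma>A (1\<^sub>m dB)"
  have cR: "R \<in> carrier_mat ?n ?n" and cG: "G \<in> carrier_mat ?n ?n" unfolding R_def G_def by auto
  have hR: "adj R = R" unfolding R_def using kron_adj[OF one_carrier_mat cQ] hQ by simp
  have pG: "psd ?n (complex_of_real (real dB) \<cdot>\<^sub>m G - \<rho>)"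
    unfolding G_def \<sigma>A_def by (rule dom_B[OF p\<rho> dB])
  have cQm: "1\<^sub>m dB - Q \<in> carrier_mat dB dB" using cQ by (simp add: minus_carrier_mat)
  have S: "1\<^sub>m ?n - R = kron dA dB (1\<^sub>m dA) (1\<^sub>m dB - Q)"
    unfolding R_def using kron_minus2[OF one_carrier_mat one_carrier_mat cQ] kron_one by simp
  have cS: "1\<^sub>m ?n - R \<in> carrier_mat ?n ?n" using cR by (simp add: minus_carrier_mat)
  have eta: "Re (mat_trace ((1\<^sub>m ?n - R) * \<rho> * (1\<^sub>m ?n - R))) \<le> real dB * \<delta> / 4"
  proof -
    have "mat_trace ((1\<^sub>m ?n - R) * \<rho> * (1\<^sub>m ?n - R)) = mat_trace (\<rho> * ((1\<^sub>m ?n - R) * (1\<^sub>m ?n - R)))"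
      by (rule trace_cyc3[OF cS c\<rho>])
    also have "(1\<^sub>m ?n - R) * (1\<^sub>m ?n - R) = kron dA dB (1\<^sub>m dA) ((1\<^sub>m dB - Q) * (1\<^sub>m dB - Q))"
      unfolding S using kron_mult[OF one_carrier_mat one_carrier_mat cQm cQm] by simp
    also have "mat_trace (\<rho> * \<dots>) = mat_trace (\<sigma>B * ((1\<^sub>m dB - Q) * (1\<^sub>m dB - Q)))"
      unfolding \<sigma>B_def using cQm by (intro trace_kron_I1[OF c\<rho>]) simp
    finally show ?thesis using Q3 by simp
  qed
  have rr: "Re (mat_trace (R * \<rho> * R)) \<le> 1"
  proof -
    have "mat_trace (R * \<rho> * R) = mat_trace (\<rho> * (R * R))" by (rule trace_cyc3[OF cR c\<rho>])
    also have "R * R = kron dA dB (1\<^sub>m dA) (Q * Q)"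
      unfolding R_def using kron_mult[OF one_carrier_mat one_carrier_mat cQ cQ] by simp
    also have "mat_trace (\<rho> * \<dots>) = mat_trace (\<sigma>B * (Q * Q))"
      unfolding \<sigma>B_def using cQ by (intro trace_kron_I1[OF c\<rho>]) simp
    finally show ?thesis using Q2 trB by simp
  qed
  have core': "t - real dB * \<delta> / 4 - 2 * sqrt (real dB * \<delta> / 4) \<le> real dB * Re (mat_trace (P * (R * G * R)))"
    unfolding t_def using core[OF p\<rho> pP pIP cR hR cG _ pG eta rr] dB by simp
  have RGR: "R * G * R = kron dA dB \<sigma>A (Q * Q)"
    unfolding R_def G_def
    using kron_mult[OF one_carrier_mat cA cQ one_carrier_mat] kron_mult[OF cA one_carrier_mat cQ cQ] cA cQ
    by simp
  have "psd ?n (kron dA dB \<sigma>A (\<sigma>B - complex_of_real \<delta> \<cdot>\<^sub>m (Q * Q)))" by (rule kron_psd[OF pA Q1])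
  also have "kron dA dB \<sigma>A (\<sigma>B - complex_of_real \<delta> \<cdot>\<^sub>m (Q * Q)) =
      kron dA dB \<sigma>A \<sigma>B - complex_of_real \<delta> \<cdot>\<^sub>m kron dA dB \<sigma>A (Q * Q)"
    using kron_minus2[OF cA cB, of "complex_of_real \<delta> \<cdot>\<^sub>m (Q * Q)"] kron_smult2[of "Q * Q" dB dA \<sigma>A] cQ by simp
  finally have pD: "psd ?n (kron dA dB \<sigma>A \<sigma>B - complex_of_real \<delta> \<cdot>\<^sub>m kron dA dB \<sigma>A (Q * Q))" .
  have "0 \<le> Re (mat_trace (P * (kron dA dB \<sigma>A \<sigma>B - complex_of_real \<delta> \<cdot>\<^sub>m kron dA dB \<sigma>A (Q * Q))))"
    by (rule trace_psd_mult[OF pP pD])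
  also have "P * (kron dA dB \<sigma>A \<sigma>B - complex_of_real \<delta> \<cdot>\<^sub>m kron dA dB \<sigma>A (Q * Q)) =
      P * kron dA dB \<sigma>A \<sigma>B - complex_of_real \<delta> \<cdot>\<^sub>m (P * kron dA dB \<sigma>A (Q * Q))"
    using mult_minus_distrib_mat[OF cP kron_carrier, of "complex_of_real \<delta> \<cdot>\<^sub>m kron dA dB \<sigma>A (Q * Q)"]
      mult_smult_distrib[OF cP kron_carrier] by simp
  also have "mat_trace \<dots> = mat_trace (P * kron dA dB \<sigma>A \<sigma>B) - complex_of_real \<delta> * mat_trace (P * kron dA dB \<sigma>A (Q * Q))"
    using cP by (simp add: trace_minus[of _ ?n] trace_smult[of _ ?n])
  finally have beta: "\<delta> * Re (mat_trace (P * (R * G * R))) \<le> Re (mat_trace (P * kron dA dB \<sigma>A \<sigma>B))"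
    unfolding RGR by simp
  have "\<delta> / real dB * (t - real dB * \<delta> / 4 - 2 * sqrt (real dB * \<delta> / 4)) \<le> \<delta> * Re (mat_trace (P * (R * G * R)))"
  proof -
    have "\<delta> / real dB * (t - real dB * \<delta> / 4 - 2 * sqrt (real dB * \<delta> / 4)) \<le>
        \<delta> / real dB * (real dB * Re (mat_trace (P * (R * G * R))))"
      using core' d0 dB by (intro mult_left_mono) auto
    then show ?thesis using dB by simp
  qed
  then have "\<delta> / real dB * (t - real dB * \<delta> / 4 - 2 * sqrt (real dB * \<delta> / 4)) \<le> Re (mat_trace (P * kron dA dB \<sigma>A \<sigma>B))"
    using beta by linarith
  then have "8 * t ^ 3 / (81 * (real dB)\<^sup>2) \<le> Re (mat_trace (P * kron dA dB \<sigma>A \<sigma>B))"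
    using scalar_final[OF tpos t1, of "real dB" \<delta> "real dB * \<delta> / 4"] dB \<delta>_def by simp
  then show ?thesis unfolding t_def \<sigma>A_def \<sigma>B_def .
qed

lemma bound_A:
  assumes p\<rho>: "psd (dA * dB) \<rho>" and tr: "mat_trace \<rho> = 1"
    and pP: "psd (dA * dB) P" and pIP: "psd (dA * dB) (1\<^sub>m (dA * dB) - P)"
    and t0: "0 < Re (mat_trace (P * \<rho>))" and dA: "0 < dA"
  shows "8 * (Re (mat_trace (P * \<rho>))) ^ 3 / (81 * (real dA)\<^sup>2) \<le>
    Re (mat_trace (P * kron dA dB (marg_A dA dB \<rho>) (marg_B dA dB \<rho>)))"
proof -
  let ?n = "dA * dB"
  define t where "t = Re (mat_trace (P * \<rho>))"
  define \<sigma>A where "\<sigma>A = marg_A dA dB \<rho>"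
  define \<sigma>B where "\<sigma>B = marg_B dA dB \<rho>"
  have c\<rho>: "\<rho> \<in> carrier_mat ?n ?n" using p\<rho> by (rule psd_carrier)
  have cP: "P \<in> carrier_mat ?n ?n" using pP by (rule psd_carrier)
  have pA: "psd dA \<sigma>A" unfolding \<sigma>A_def by (rule psd_margA[OF p\<rho>])
  have pB: "psd dB \<sigma>B" unfolding \<sigma>B_def by (rule psd_margB[OF p\<rho>])
  have cA: "\<sigma>A \<in> carrier_mat dA dA" and cB: "\<sigma>B \<in> carrier_mat dB dB" unfolding \<sigma>A_def \<sigma>B_def by auto
  have trA: "mat_trace \<sigma>A = 1" unfolding \<sigma>A_def using trace_margA[OF c\<rho>] tr by simp
  have t1: "t \<le> 1" unfolding t_def using trace_le_P[OF p\<rho> pIP cP] tr by simp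
  have tpos: "0 < t" unfolding t_def by (rule t0)
  define \<delta> where "\<delta> = 4 * t\<^sup>2 / (9 * real dA)"
  have d0: "0 < \<delta>" unfolding \<delta>_def using tpos dA by simp
  obtain Q where cQ: "Q \<in> carrier_mat dA dA" and hQ: "adj Q = Q"
    and Q1: "psd dA (\<sigma>A - complex_of_real \<delta> \<cdot>\<^sub>m (Q * Q))"
    and Q2: "Re (mat_trace (\<sigma>A * (Q * Q))) \<le> Re (mat_trace \<sigma>A)"
    and Q3: "Re (mat_trace (\<sigma>A * ((1\<^sub>m dA - Q) * (1\<^sub>m dA - Q)))) \<le> real dA * \<delta> / 4"
    using Qconstr[OF pA d0] by blast
  define R where "R = kron dA dB Q (1\<^sub>m dB)"
  define G where "G = kron dA dB (1\<^sub>m dA) \<sigma>B"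
  have cR: "R \<in> carrier_mat ?n ?n" and cG: "G \<in> carrier_mat ?n ?n" unfolding R_def G_def by auto
  have hR: "adj R = R" unfolding R_def using kron_adj[OF cQ one_carrier_mat] hQ by simp
  have pG: "psd ?n (complex_of_real (real dA) \<cdot>\<^sub>m G - \<rho>)"
    unfolding G_def \<sigma>B_def by (rule dom_A[OF p\<rho>])
  have cQm: "1\<^sub>m dA - Q \<in> carrier_mat dA dA" using cQ by (simp add: minus_carrier_mat)
  have S: "1\<^sub>m ?n - R = kron dA dB (1\<^sub>m dA - Q) (1\<^sub>m dB)"
    unfolding R_def using kron_minus1[OF one_carrier_mat cQ one_carrier_mat] kron_one by simp
  have cS: "1\<^sub>m ?n - R \<in> carrier_mat ?n ?n" using cR by (simp add: minus_carrier_mat)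
  have eta: "Re (mat_trace ((1\<^sub>m ?n - R) * \<rho> * (1\<^sub>m ?n - R))) \<le> real dA * \<delta> / 4"
  proof -
    have "mat_trace ((1\<^sub>m ?n - R) * \<rho> * (1\<^sub>m ?n - R)) = mat_trace (\<rho> * ((1\<^sub>m ?n - R) * (1\<^sub>m ?n - R)))"
      by (rule trace_cyc3[OF cS c\<rho>])
    also have "(1\<^sub>m ?n - R) * (1\<^sub>m ?n - R) = kron dA dB ((1\<^sub>m dA - Q) * (1\<^sub>m dA - Q)) (1\<^sub>m dB)"
      unfolding S using kron_mult[OF cQm cQm one_carrier_mat one_carrier_mat] by simp
    also have "mat_trace (\<rho> * \<dots>) = mat_trace (\<sigma>A * ((1\<^sub>m dA - Q) * (1\<^sub>m dA - Q)))"
      unfolding \<sigma>A_def using cQm by (intro trace_kron_I2[OF c\<rho>]) simp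
    finally show ?thesis using Q3 by simp
  qed
  have rr: "Re (mat_trace (R * \<rho> * R)) \<le> 1"
  proof -
    have "mat_trace (R * \<rho> * R) = mat_trace (\<rho> * (R * R))" by (rule trace_cyc3[OF cR c\<rho>])
    also have "R * R = kron dA dB (Q * Q) (1\<^sub>m dB)"
      unfolding R_def using kron_mult[OF cQ cQ one_carrier_mat one_carrier_mat] by simp
    also have "mat_trace (\<rho> * \<dots>) = mat_trace (\<sigma>A * (Q * Q))"
      unfolding \<sigma>A_def using cQ by (intro trace_kron_I2[OF c\<rho>]) simp
    finally show ?thesis using Q2 trA by simp
  qed
  have core': "t - real dA * \<delta> / 4 - 2 * sqrt (real dA * \<delta> / 4) \<le> real dA * Re (mat_trace (P * (R * G * R)))"
    unfolding t_def using core[OF p\<rho> pP pIP cR hR cG _ pG eta rr] dA by simp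
  have RGR: "R * G * R = kron dA dB (Q * Q) \<sigma>B"
    unfolding R_def G_def
    using kron_mult[OF cQ one_carrier_mat one_carrier_mat cB] kron_mult[OF cQ cQ cB one_carrier_mat] cB cQ
    by simp
  have "psd ?n (kron dA dB (\<sigma>A - complex_of_real \<delta> \<cdot>\<^sub>m (Q * Q)) \<sigma>B)" by (rule kron_psd[OF Q1 pB])
  also have "kron dA dB (\<sigma>A - complex_of_real \<delta> \<cdot>\<^sub>m (Q * Q)) \<sigma>B =
      kron dA dB \<sigma>A \<sigma>B - complex_of_real \<delta> \<cdot>\<^sub>m kron dA dB (Q * Q) \<sigma>B"
    using kron_minus1[OF cA _ cB, of "complex_of_real \<delta> \<cdot>\<^sub>m (Q * Q)"] kron_smult1[of "Q * Q" dA dB _ \<sigma>B] cQ by simp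
  finally have pD: "psd ?n (kron dA dB \<sigma>A \<sigma>B - complex_of_real \<delta> \<cdot>\<^sub>m kron dA dB (Q * Q) \<sigma>B)" .
  have "0 \<le> Re (mat_trace (P * (kron dA dB \<sigma>A \<sigma>B - complex_of_real \<delta> \<cdot>\<^sub>m kron dA dB (Q * Q) \<sigma>B)))"
    by (rule trace_psd_mult[OF pP pD])
  also have "P * (kron dA dB \<sigma>A \<sigma>B - complex_of_real \<delta> \<cdot>\<^sub>m kron dA dB (Q * Q) \<sigma>B) =
      P * kron dA dB \<sigma>A \<sigma>B - complex_of_real \<delta> \<cdot>\<^sub>m (P * kron dA dB (Q * Q) \<sigma>B)"
    using mult_minus_distrib_mat[OF cP kron_carrier, of "complex_of_real \<delta> \<cdot>\<^sub>m kron dA dB (Q * Q) \<sigma>B"]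
      mult_smult_distrib[OF cP kron_carrier] by simp
  also have "mat_trace \<dots> = mat_trace (P * kron dA dB \<sigma>A \<sigma>B) - complex_of_real \<delta> * mat_trace (P * kron dA dB (Q * Q) \<sigma>B)"
    using cP by (simp add: trace_minus[of _ ?n] trace_smult[of _ ?n])
  finally have beta: "\<delta> * Re (mat_trace (P * (R * G * R))) \<le> Re (mat_trace (P * kron dA dB \<sigma>A \<sigma>B))"
    unfolding RGR by simp
  have "\<delta> / real dA * (t - real dA * \<delta> / 4 - 2 * sqrt (real dA * \<delta> / 4)) \<le> \<delta> * Re (mat_trace (P * (R * G * R)))"
  proof -
    have "\<delta> / real dA * (t - real dA * \<delta> / 4 - 2 * sqrt (real dA * \<delta> / 4)) \<le>
        \<delta> / real dA * (real dA * Re (mat_trace (P * (R * G * R))))"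
      using core' d0 dA by (intro mult_left_mono) auto
    then show ?thesis using dA by simp
  qed
  then have "\<delta> / real dA * (t - real dA * \<delta> / 4 - 2 * sqrt (real dA * \<delta> / 4)) \<le> Re (mat_trace (P * kron dA dB \<sigma>A \<sigma>B))"
    using beta by linarith
  then have "8 * t ^ 3 / (81 * (real dA)\<^sup>2) \<le> Re (mat_trace (P * kron dA dB \<sigma>A \<sigma>B))"
    using scalar_final[OF tpos t1, of "real dA" \<delta> "real dA * \<delta> / 4"] dA \<delta>_def by simp
  then show ?thesis unfolding t_def \<sigma>A_def \<sigma>B_def .
qed




lemma log_bound:
  fixes x t d eps :: real
  assumes e0: "0 \<le> eps" and e1: "eps < 1" and te: "1 - eps \<le> t" and d: "1 \<le> d"
    and x: "8 * t ^ 3 / (81 * d\<^sup>2) \<le> x"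
  shows "- log 2 x \<le> 2 * log 2 d + 3 * log 2 (1 / (1 - eps)) + 6 * log 2 3 - 4"
proof -
  have t0: "0 < t" using te e1 by simp
  define y where "y = 8 * t ^ 3 / (81 * d\<^sup>2)"
  have y0: "0 < y" unfolding y_def using t0 d by simp
  have "log 2 y \<le> log 2 x" using x y0 unfolding y_def by simp
  moreover have "log 2 y = 3 + 3 * log 2 t - 4 * log 2 3 - 2 * log 2 d"
  proof -
    have "log 2 y = log 2 ((2::real) ^ 3 * t ^ 3) - log 2 ((3::real) ^ 4 * d\<^sup>2)"
    proof -
      have "y = ((2::real) ^ 3 * t ^ 3) / ((3::real) ^ 4 * d\<^sup>2)" unfolding y_def by simp
      then show ?thesis using t0 d by (simp only: log_divide) (auto intro!: log_divide)
    qed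
    also have "\<dots> = 3 + 3 * log 2 t - (4 * log 2 3 + 2 * log 2 d)"
    proof -
      have a: "log 2 ((2::real) ^ 3 * t ^ 3) = log 2 ((2::real) ^ 3) + log 2 (t ^ 3)"
        using t0 by (simp add: log_mult)
      have b: "log 2 ((3::real) ^ 4 * d\<^sup>2) = log 2 ((3::real) ^ 4) + log 2 (d\<^sup>2)"
        using d by (simp add: log_mult)
      have c: "log 2 ((2::real) ^ 3) = 3" by (subst log_nat_power) auto
      have e: "log 2 ((3::real) ^ 4) = 4 * log 2 3" by (subst log_nat_power) auto
      have f: "log 2 (t ^ 3) = 3 * log 2 t" using t0 by (subst log_nat_power) auto
      have g: "log 2 (d\<^sup>2) = 2 * log 2 d" using d by (subst log_nat_power) auto
      show ?thesis unfolding a b c e f g by simp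
    qed
    finally show ?thesis by simp
  qed
  moreover have "log 2 (1 - eps) \<le> log 2 t" using te e1 by simp
  moreover have "log 2 (1 / (1 - eps)) = - log 2 (1 - eps)" using e1 by (simp add: log_divide)
  moreover have "1 \<le> log 2 3" by simp
  ultimately show ?thesis by linarith
qed

theorem proposition1:
  fixes dA dB :: nat and eps :: real and \<rho> :: "complex mat"
  assumes "0 \<le> eps" and "eps < 1"
    and "density_mat (dA * dB) \<rho>"
  shows "hyp_test_MI dA dB eps \<rho> \<le>
    ereal (2 * log 2 (real (min dA dB)) + 3 * log 2 (1 / (1 - eps)) + 6 * log 2 3 - 4)"
proof -
  let ?n = "dA * dB"
  let ?\<beta> = "kron dA dB (marg_A dA dB \<rho>) (marg_B dA dB \<rho>)"
  let ?B = "2 * log 2 (real (min dA dB)) + 3 * log 2 (1 / (1 - eps)) + 6 * log 2 3 - 4"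
  have p\<rho>: "psd ?n \<rho>" and tr: "mat_trace \<rho> = 1"
    using assms(3) by (auto simp: density_mat_def psd_iff)
  have c\<rho>: "\<rho> \<in> carrier_mat ?n ?n" using p\<rho> by (rule psd_carrier)
  have n0: "?n \<noteq> 0"
  proof
    assume h: "?n = 0"
    have "dim_row \<rho> = 0" using c\<rho> h by simp
    then have "mat_trace \<rho> = 0" by (simp add: mat_trace_def)
    then show False using tr by simp
  qed
  then have dA: "0 < dA" and dB: "0 < dB" by auto
  show ?thesis
    unfolding hyp_test_MI_def hyp_test_div_def
  proof (rule SUP_least)
    fix P assume "P \<in> {P. povm_elem ?n P \<and> 1 - eps \<le> Re (mat_trace (P * \<rho>))}"
    then have pP: "psd ?n P" and pIP: "psd ?n (1\<^sub>m ?n - P)" and te: "1 - eps \<le> Re (mat_trace (P * \<rho>))"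
      by (auto simp: povm_elem_def psd_iff)
    define t where "t = Re (mat_trace (P * \<rho>))"
    have t0: "0 < t" using te assms(2) unfolding t_def by simp
    have bnd: "8 * t ^ 3 / (81 * (real (min dA dB))\<^sup>2) \<le> Re (mat_trace (P * ?\<beta>))"
    proof (cases "dA \<le> dB")
      case True
      then show ?thesis using bound_A[OF p\<rho> tr pP pIP _ dA] t0 unfolding t_def by simp
    next
      case False
      then show ?thesis using bound_B[OF p\<rho> tr pP pIP _ dB] t0 unfolding t_def by simp
    qed
    have d1: "1 \<le> real (min dA dB)" using dA dB by simp
    have pos: "0 < Re (mat_trace (P * ?\<beta>))"
      using bnd t0 d1 by (smt (verit) divide_pos_pos mult_pos_pos zero_less_power)
    have "- log 2 (Re (mat_trace (P * ?\<beta>))) \<le> ?B"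
      using log_bound[OF assms(1,2) _ d1 bnd] te unfolding t_def by simp
    then show "(if Re (mat_trace (P * ?\<beta>)) = 0 then \<infinity> else ereal (- log 2 (Re (mat_trace (P * ?\<beta>))))) \<le> ereal ?B"
      using pos by simp
  qed
qed


end
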